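(* Let $1<p<\infty$ and let $f\in L_1([-\pi,\pi])$ have Fourier series $\sum_{k\in\mathbb Z}a_ke^{ikx}$. If $I_p(f)<\infty$, then $f\in L_p([-\pi,\pi])$ and $$\|f\|_{L_p([-\pi,\pi])}\lesssim I_p(f),$$ with a constant depending only on $p$.
   Context: $p'=p/(p-1)$; $a_k=\frac1{2\pi}\int_{-\pi}^\pi f(x)e^{-ikx}dx$. Put $|\Delta a_k|=|a_k-a_{k+1}|$ for $k>0$, $|\Delta a_k|=|a_k-a_{k-1}|$ for $k<0$, $|\Delta a_0|=|a_0-a_1|+|a_0-a_{-1}|$; let $\Theta_k(f)=\sum_{[2^{k-1}]\le|m|<2^k}|\Delta a_m|$ for $k\ge0$ ($[\cdot]$ the floor function), and $I_p(f)=\big(\sum_{k=0}^\infty(2^{k/p'}\Theta_k(f))^p\big)^{1/p}$. *)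

theory Defs
  imports "HOL-Analysis.Analysis"
begin

definition fourier_coeff :: "(real \<Rightarrow> complex) \<Rightarrow> int \<Rightarrow> complex" where
  "fourier_coeff f k = complex_of_real (1 / (2 * pi)) *
     (LINT x : {-pi..pi} | lborel. f x * exp (- \<i> * of_int k * of_real x))"

definition delta_coeff :: "(real \<Rightarrow> complex) \<Rightarrow> int \<Rightarrow> real" where
  "delta_coeff f k =
     (if k > 0 then cmod (fourier_coeff f k - fourier_coeff f (k + 1))
      else if k < 0 then cmod (fourier_coeff f k - fourier_coeff f (k - 1))
      else cmod (fourier_coeff f 0 - fourier_coeff f 1) + cmod (fourier_coeff f 0 - fourier_coeff f (-1)))"

definition Theta :: "(real \<Rightarrow> complex) \<Rightarrow> nat \<Rightarrow> real" where
  "Theta f k = (\<Sum>m \<in> {m::int. \<lfloor>(2::real) powr (real k - 1)\<rfloor> \<le> \<bar>m\<bar> \<and> \<bar>m\<bar> < 2 ^ k}. delta_coeff f m)"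

definition conj_exp :: "real \<Rightarrow> real" where
  "conj_exp p = p / (p - 1)"

definition Ip_term :: "real \<Rightarrow> (real \<Rightarrow> complex) \<Rightarrow> nat \<Rightarrow> real" where
  "Ip_term p f k = (2 powr (real k / conj_exp p) * Theta f k) powr p"

definition Ip_finite :: "real \<Rightarrow> (real \<Rightarrow> complex) \<Rightarrow> bool" where
  "Ip_finite p f \<longleftrightarrow> summable (Ip_term p f)"

definition Ip :: "real \<Rightarrow> (real \<Rightarrow> complex) \<Rightarrow> real" where
  "Ip p f = (\<Sum>k. Ip_term p f k) powr (1 / p)"

definition in_Lp :: "real \<Rightarrow> (real \<Rightarrow> complex) \<Rightarrow> bool" where
  "in_Lp p f \<longleftrightarrow> f \<in> borel_measurable (restrict_space lborel {-pi..pi})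
      \<and> set_integrable lborel {-pi..pi} (\<lambda>x. cmod (f x) powr p)"

definition Lp_norm :: "real \<Rightarrow> (real \<Rightarrow> complex) \<Rightarrow> real" where
  "Lp_norm p f = (LINT x : {-pi..pi} | lborel. cmod (f x) powr p) powr (1 / p)"

end

theory Submission
  imports Defs
begin


definition E :: "int \<Rightarrow> real \<Rightarrow> complex" where
  "E l x = exp (\<i> * of_int l * of_real x)"

lemma E_cont[continuous_intros]: "continuous_on S (E l)"
  unfolding E_def by (intro continuous_intros)

lemma E_meas[measurable]: "E l \<in> borel_measurable borel"
  by (intro borel_measurable_continuous_onI E_cont)

lemma E_mult: "E l x * E m x = E (l+m) x"
  unfolding E_def by (simp add: exp_add[symmetric] algebra_simps)

lemma norm_E[simp]: "norm (E l x) = 1"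
proof -
  have "\<i> * of_int l * of_real x = \<i> * of_real (of_int l * x)" by simp
  then show ?thesis unfolding E_def by (metis norm_exp_i_times)
qed

lemma E_0[simp]: "E 0 x = 1" by (simp add: E_def)

lemma E_neg_coeff: "exp (- \<i> * of_int k * of_real x) = E (-k) x"
  unfolding E_def by simp

lemma E_period: "E l pi = E l (-pi)"
proof -
  have "E l pi = exp (2 * of_int l * pi * \<i>) * E l (-pi)"
    unfolding E_def exp_add[symmetric] by (rule arg_cong[where f=exp]) (simp add: algebra_simps)
  moreover have "exp (2 * of_int l * pi * \<i>) = 1"
    using exp_integer_2pi[of "of_int l"] by simp
  ultimately show ?thesis by simp
qed

lemma int_E: "(LINT x:{-pi..pi}|lborel. E l x) = (if l = 0 then 2*pi else 0)"
proof (cases "l = 0")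
  case True
  have "(LINT x:{-pi..pi}|lborel. E l x) = (LBINT x=-pi..pi. (1::complex))"
    using True by (simp add: interval_integral_Icc)
  also have "\<dots> = of_real pi - of_real (-pi)"
    by (rule interval_integral_FTC_finite[where F="\<lambda>x. of_real x"])
       (auto intro!: continuous_intros derivative_eq_intros)
  finally show ?thesis using True by simp
next
  case False
  define F where "F x = E l x / (\<i> * of_int l)" for x
  have "(LINT x:{-pi..pi}|lborel. E l x) = (LBINT x=-pi..pi. E l x)"
    by (simp add: interval_integral_Icc)
  also have "\<dots> = F pi - F (-pi)"
  proof (rule interval_integral_FTC_finite)
    show "continuous_on {min (- pi) pi..max (- pi) pi} (E l)" by (intro continuous_intros)
    fix x :: real
    have "((\<lambda>z. exp (\<i> * of_int l * z) / (\<i> * of_int l)) has_field_derivative exp (\<i> * of_int l * of_real x)) (at (of_real x))"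
      using False by (auto intro!: derivative_eq_intros)
    from has_vector_derivative_real_field[OF this]
    show "(F has_vector_derivative E l x) (at x within {min (- pi) pi..max (- pi) pi})"
      unfolding F_def E_def by simp
  qed
  also have "\<dots> = 0" unfolding F_def by (simp add: E_period)
  finally show ?thesis using False by simp
qed


lemma si_bmult:
  fixes h g :: "real \<Rightarrow> complex"
  assumes h: "set_integrable lborel A h" and g: "g \<in> borel_measurable borel"
    and B: "\<And>x. norm (g x) \<le> B"
  shows "set_integrable lborel A (\<lambda>x. h x * g x)"
proof (rule set_integrable_bound[of lborel A "\<lambda>x. of_real B * h x"])
  show "set_integrable lborel A (\<lambda>x. of_real B * h x)"
    using h by (intro set_integrable_mult_right) auto
  have "(\<lambda>x. indicator A x *\<^sub>R h x) \<in> borel_measurable lborel"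
    using h unfolding set_integrable_def by (rule borel_measurable_integrable)
  then have "(\<lambda>x. (indicator A x *\<^sub>R h x) * g x) \<in> borel_measurable lborel"
    using g by measurable
  moreover have "(\<lambda>x. (indicator A x *\<^sub>R h x) * g x) = (\<lambda>x. indicator A x *\<^sub>R (h x * g x))"
    by (auto simp: indicator_def)
  ultimately show "set_borel_measurable lborel A (\<lambda>x. h x * g x)"
    unfolding set_borel_measurable_def by simp
  have B0: "0 \<le> B" using B[of 0] norm_ge_zero order_trans by blast
  show "AE x in lborel. x \<in> A \<longrightarrow> norm (h x * g x) \<le> norm (of_real B * h x)"
  proof (rule AE_I2, rule impI)
    fix x
    have "norm (h x * g x) = norm (h x) * norm (g x)" by (simp add: norm_mult)
    also have "\<dots> \<le> norm (h x) * B" using B[of x] by (intro mult_left_mono) auto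
    also have "\<dots> = norm (of_real B * h x)" using B0 by (simp add: norm_mult)
    finally show "norm (h x * g x) \<le> norm (of_real B * h x)" .
  qed
qed

definition tp :: "(int \<times> complex) list \<Rightarrow> real \<Rightarrow> complex" where
  "tp L x = (\<Sum>(l,c)\<leftarrow>L. c * E l x)"

lemma tp_Nil[simp]: "tp [] x = 0" by (simp add: tp_def)
lemma tp_Cons[simp]: "tp ((l,c)#L) x = c * E l x + tp L x" by (simp add: tp_def)
lemma tp_append: "tp (L1 @ L2) x = tp L1 x + tp L2 x" by (simp add: tp_def)

definition tpmul :: "(int \<times> complex) list \<Rightarrow> (int \<times> complex) list \<Rightarrow> (int \<times> complex) list" where
  "tpmul L1 L2 = concat (map (\<lambda>(l1,c1). map (\<lambda>(l2,c2). (l1+l2, c1*c2)) L2) L1)"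

lemma tp_map: "tp (map (\<lambda>(l2,c2). (l1+l2, c1*c2)) L2) x = c1 * E l1 x * tp L2 x"
  by (induction L2) (auto simp: E_mult[symmetric] algebra_simps)

lemma tp_mul: "tp (tpmul L1 L2) x = tp L1 x * tp L2 x"
  by (induction L1) (auto simp: tpmul_def tp_append tp_map algebra_simps)

lemma tp_cont: "continuous_on S (tp L)"
proof (induction L)
  case Nil then show ?case by (simp add: tp_def)
next
  case (Cons a L)
  obtain l c where "a = (l,c)" by force
  have "tp (a#L) = (\<lambda>x. c * E l x + tp L x)" using \<open>a = (l,c)\<close> by auto
  then show ?case using Cons by (simp, intro continuous_intros)
qed

lemma tp_meas[measurable]: "tp L \<in> borel_measurable borel"
  by (intro borel_measurable_continuous_onI tp_cont)

lemma tp_bounded: "\<exists>B. \<forall>x. norm (tp L x) \<le> B"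
proof (induction L)
  case Nil then show ?case by (intro exI[of _ 0]) simp
next
  case (Cons a L)
  obtain l c where a: "a = (l,c)" by force
  from Cons obtain B where B: "\<And>x. norm (tp L x) \<le> B" by blast
  have "norm (tp (a#L) x) \<le> norm c + B" for x
    using a B[of x] norm_triangle_ineq[of "c * E l x" "tp L x"] by (simp add: norm_mult)
  then show ?case by blast
qed

lemma tp_orth:
  assumes h: "set_integrable lborel {-pi..pi} h"
    and orth: "\<And>k. (LINT x:{-pi..pi}|lborel. h x * E k x) = 0"
  shows "(LINT x:{-pi..pi}|lborel. h x * tp L x) = 0"
proof (induction L)
  case Nil then show ?case by simp
next
  case (Cons a L)
  obtain l c where a: "a = (l,c)" by force
  obtain B where B: "\<And>x. norm (tp L x) \<le> B" using tp_bounded by blast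
  have i1: "set_integrable lborel {-pi..pi} (\<lambda>x. c * (h x * E l x))"
    by (intro set_integrable_mult_right si_bmult[OF h]) auto
  have i2: "set_integrable lborel {-pi..pi} (\<lambda>x. h x * tp L x)"
    by (rule si_bmult[OF h tp_meas B])
  have "(LINT x:{-pi..pi}|lborel. h x * tp (a#L) x)
      = (LINT x:{-pi..pi}|lborel. c * (h x * E l x) + h x * tp L x)"
    using a by (simp add: algebra_simps)
  also have "\<dots> = c * (LINT x:{-pi..pi}|lborel. h x * E l x) + (LINT x:{-pi..pi}|lborel. h x * tp L x)"
    using set_integral_add(2)[OF i1 i2] by simp
  also have "\<dots> = 0" using orth Cons by simp
  finally show ?case .
qed

lemma rpf_tp:
  fixes q :: "complex \<Rightarrow> real"
  assumes "real_polynomial_function q"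
  shows "\<exists>L. \<forall>x. complex_of_real (q (cis x)) = tp L x"
  using assms
proof (induction rule: real_polynomial_function.induct)
  case (linear f)
  interpret bounded_linear f by fact
  define a where "a = f 1"
  define b where "b = f \<i>"
  have fz: "f (cis x) = cos x * a + sin x * b" for x
  proof -
    have "cis x = cos x *\<^sub>R 1 + sin x *\<^sub>R \<i>"
      by (simp add: complex_eq_iff)
    then show ?thesis unfolding a_def b_def by (simp add: add scale)
  qed
  have E1: "E 1 x = cis x" for x
    unfolding E_def by (simp add: cis_conv_exp)
  have E2: "E (-1) x = cis (-x)" for x
    unfolding E_def by (simp add: cis_conv_exp)
  have "complex_of_real (f (cis x)) = tp [(1, (a - \<i> * b)/2), (-1, (a + \<i> * b)/2)] x" for x
    by (simp add: fz E1 E2 complex_eq_iff field_simps)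
  then show ?case by blast
next
  case (const c)
  have "complex_of_real c = tp [(0, of_real c)] x" for x by simp
  then show ?case by blast
next
  case (add f g)
  then obtain L1 L2 where "\<forall>x. complex_of_real (f (cis x)) = tp L1 x" "\<forall>x. complex_of_real (g (cis x)) = tp L2 x"
    by blast
  then have "complex_of_real (f (cis x) + g (cis x)) = tp (L1 @ L2) x" for x
    by (simp add: tp_append)
  then show ?case by blast
next
  case (mult f g)
  then obtain L1 L2 where "\<forall>x. complex_of_real (f (cis x)) = tp L1 x" "\<forall>x. complex_of_real (g (cis x)) = tp L2 x"
    by blast
  then have "complex_of_real (f (cis x) * g (cis x)) = tp (tpmul L1 L2) x" for x
    by (simp add: tp_mul)
  then show ?case by blast
qed

lemma orth_cont:
  fixes \<phi> :: "complex \<Rightarrow> real"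
  assumes h: "set_integrable lborel {-pi..pi} h"
    and orth: "\<And>k. (LINT x:{-pi..pi}|lborel. h x * E k x) = 0"
    and cont: "continuous_on (sphere 0 1) \<phi>"
  shows "(LINT x:{-pi..pi}|lborel. h x * of_real (\<phi> (cis x))) = 0"
proof -
  define A where "A = (LINT x:{-pi..pi}|lborel. norm (h x))"
  have A0: "0 \<le> A" unfolding A_def set_lebesgue_integral_def
    by (rule Bochner_Integration.integral_nonneg) auto
  have cc: "continuous_on UNIV (\<lambda>x. \<phi> (cis x))"
    by (rule continuous_on_compose2[OF cont continuous_on_cis]) auto
  have key: "norm (LINT x:{-pi..pi}|lborel. h x * of_real (\<phi> (cis x))) \<le> e * A" if e: "0 < e" for e
  proof -
    obtain q where q: "polynomial_function q" and qa: "\<And>z. z \<in> sphere 0 1 \<Longrightarrow> norm (\<phi> z - q z) < e"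
      using Stone_Weierstrass_polynomial_function[OF compact_sphere cont e] by blast
    have "real_polynomial_function q" using q real_polynomial_function_eq by blast
    then obtain L where L: "\<And>x. complex_of_real (q (cis x)) = tp L x" using rpf_tp by blast
    have bd: "norm (complex_of_real (\<phi> (cis x) - q (cis x))) \<le> e" for x
    proof -
      have "norm (complex_of_real (\<phi> (cis x) - q (cis x))) = \<bar>\<phi> (cis x) - q (cis x)\<bar>"
        by (rule norm_of_real)
      then show ?thesis using qa[of "cis x"] by simp
    qed
    have meas: "(\<lambda>x. complex_of_real (\<phi> (cis x) - q (cis x))) \<in> borel_measurable borel"
    proof -
      have "(\<lambda>x. complex_of_real (\<phi> (cis x) - q (cis x))) = (\<lambda>x. complex_of_real (\<phi> (cis x)) - tp L x)"
        using L by (auto simp: fun_eq_iff)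
      moreover have "continuous_on UNIV (\<lambda>x. complex_of_real (\<phi> (cis x)) - tp L x)"
        by (intro continuous_intros cc tp_cont)
      ultimately show ?thesis by (simp add: borel_measurable_continuous_onI)
    qed
    have i1: "set_integrable lborel {-pi..pi} (\<lambda>x. h x * complex_of_real (\<phi> (cis x) - q (cis x)))"
      by (rule si_bmult[OF h meas bd])
    obtain B where B: "\<And>x. norm (tp L x) \<le> B" using tp_bounded by blast
    have i2: "set_integrable lborel {-pi..pi} (\<lambda>x. h x * tp L x)"
      by (rule si_bmult[OF h tp_meas B])
    have "(LINT x:{-pi..pi}|lborel. h x * of_real (\<phi> (cis x)))
        = (LINT x:{-pi..pi}|lborel. h x * complex_of_real (\<phi> (cis x) - q (cis x)) + h x * tp L x)"
      using L by (simp add: algebra_simps of_real_diff)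
    also have "\<dots> = (LINT x:{-pi..pi}|lborel. h x * complex_of_real (\<phi> (cis x) - q (cis x)))"
      using set_integral_add(2)[OF i1 i2] tp_orth[OF h orth] by simp
    finally have eq: "(LINT x:{-pi..pi}|lborel. h x * of_real (\<phi> (cis x))) = (LINT x:{-pi..pi}|lborel. h x * complex_of_real (\<phi> (cis x) - q (cis x)))" .
    have "norm (LINT x:{-pi..pi}|lborel. h x * complex_of_real (\<phi> (cis x) - q (cis x)))
        \<le> (LINT x:{-pi..pi}|lborel. norm (h x * complex_of_real (\<phi> (cis x) - q (cis x))))"
      by (rule set_integral_norm_bound[OF i1])
    also have "\<dots> \<le> (LINT x:{-pi..pi}|lborel. e * norm (h x))"
    proof (rule set_integral_mono)
      show "set_integrable lborel {-pi..pi} (\<lambda>x. norm (h x * complex_of_real (\<phi> (cis x) - q (cis x))))"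
        using i1 by (simp add: set_integrable_norm)
      show "set_integrable lborel {-pi..pi} (\<lambda>x. e * norm (h x))"
        using h by (intro set_integrable_mult_right) (simp add: set_integrable_norm)
      fix x show "norm (h x * complex_of_real (\<phi> (cis x) - q (cis x))) \<le> e * norm (h x)"
        using bd[of x] mult_left_mono[OF bd[of x], of "norm (h x)"] by (simp add: norm_mult mult.commute)
    qed
    also have "\<dots> = e * A" unfolding A_def by simp
    finally show ?thesis using eq by simp
  qed
  have "norm (LINT x:{-pi..pi}|lborel. h x * of_real (\<phi> (cis x))) \<le> 0"
  proof (rule field_le_epsilon)
    fix e :: real assume e: "0 < e"
    have "norm (LINT x:{-pi..pi}|lborel. h x * of_real (\<phi> (cis x))) \<le> (e / (A+1)) * A"
      using key[of "e/(A+1)"] e A0 by simp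
    also have "\<dots> \<le> e" using e A0 by (simp add: field_simps)
    finally show "norm (LINT x:{-pi..pi}|lborel. h x * of_real (\<phi> (cis x))) \<le> 0 + e" by simp
  qed
  then show ?thesis by simp
qed


lemma cap_set:
  fixes a x :: real
  assumes a: "-pi < a" "a < pi" and x: "-pi \<le> x" "x \<le> pi"
  shows "cos ((pi - a)/2) < cos (x - (a+pi)/2) \<longleftrightarrow> a < x \<and> x < pi"
proof -
  define y where "y = x - (a+pi)/2"
  define d where "d = (pi - a)/2"
  have d: "0 < d" "d < pi" using a unfolding d_def by auto
  have yr: "- (2*pi - d) \<le> y" "y \<le> d" using a x unfolding y_def d_def by (auto simp: field_simps)
  show ?thesis
  proof
    assume "a < x \<and> x < pi"
    then have "\<bar>y\<bar> < d" unfolding y_def d_def by (auto simp: field_simps)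
    then have "cos d < cos \<bar>y\<bar>" using d by (intro cos_monotone_0_pi) auto
    then show "cos ((pi - a)/2) < cos (x - (a+pi)/2)" unfolding y_def d_def by simp
  next
    assume c: "cos ((pi - a)/2) < cos (x - (a+pi)/2)"
    then have c': "cos d < cos y" unfolding y_def d_def .
    show "a < x \<and> x < pi"
    proof (rule ccontr)
      assume "\<not> (a < x \<and> x < pi)"
      then have "x \<le> a \<or> x = pi" using x by auto
      then show False
      proof
        assume "x = pi"
        then have "y = d" unfolding y_def d_def by (simp add: field_simps)
        then show False using c' by simp
      next
        assume "x \<le> a"
        then have z: "d \<le> -y" unfolding y_def d_def by (simp add: field_simps)
        have "cos y = cos (-y)" by simp
        show False
        proof (cases "-y \<le> pi")
          case True
          then have "cos (-y) \<le> cos d" using d z by (intro cos_monotone_0_pi_le) auto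
          then show False using c' by simp
        next
          case False
          have "cos (-y) = cos (2*pi - (-y))" by (rule cos_2pi_minus[symmetric])
          also have "\<dots> \<le> cos d" using d z yr False by (intro cos_monotone_0_pi_le) auto
          finally show False using c' by simp
        qed
      qed
    qed
  qed
qed

lemma orth_Ioo:
  assumes h: "set_integrable lborel {-pi..pi} h"
    and orth: "\<And>k. (LINT x:{-pi..pi}|lborel. h x * E k x) = 0"
    and a: "-pi < a" "a < pi"
  shows "(LINT x:{a<..<pi}|lborel. h x) = 0"
proof -
  define th where "th = (a+pi)/2"
  define c where "c = cos ((pi - a)/2)"
  define \<phi> where "\<phi> n z = root n (min 1 (max 0 (Re (z * cnj (cis th)) - c)))" for n :: nat and z :: complex
  define S where "S = {x. c < cos (x - th)}"
  define H0 where "H0 x = indicator {-pi..pi} x *\<^sub>R h x" for x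
  have H0i: "integrable lborel H0" using h unfolding set_integrable_def H0_def .
  have H0m[measurable]: "H0 \<in> borel_measurable lborel" using H0i by (rule borel_measurable_integrable)
  have phicis: "\<phi> n (cis x) = root n (min 1 (max 0 (cos (x - th) - c)))" for n x
    unfolding \<phi>_def by (simp add: cis_cnj cis_mult)
  have zero: "integral\<^sup>L lborel (\<lambda>x. H0 x * of_real (\<phi> n (cis x))) = 0" for n
  proof -
    have "continuous_on (sphere 0 1) (\<phi> n)" unfolding \<phi>_def by (intro continuous_intros)
    from orth_cont[OF h orth this]
    show ?thesis unfolding set_lebesgue_integral_def H0_def by simp
  qed
  have rb: "0 \<le> root n y \<and> root n y \<le> 1" if "0 \<le> y" "y \<le> 1" for n y
  proof (cases "n = 0")
    case True then show ?thesis by simp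
  next
    case False
    then have "root n y \<le> root n 1" using that by simp
    then show ?thesis using that False by simp
  qed
  have lim: "(\<lambda>n. integral\<^sup>L lborel (\<lambda>x. H0 x * of_real (\<phi> n (cis x))))
       \<longlonglongrightarrow> integral\<^sup>L lborel (\<lambda>x. H0 x * of_real (indicator S x))"
  proof (rule integral_dominated_convergence[where w="\<lambda>x. norm (H0 x)"])
    show "(\<lambda>x. H0 x * complex_of_real (indicator S x)) \<in> borel_measurable lborel"
      unfolding S_def by measurable
    show "(\<lambda>x. H0 x * complex_of_real (\<phi> n (cis x))) \<in> borel_measurable lborel" for n
      unfolding phicis by measurable
    show "integrable lborel (\<lambda>x. norm (H0 x))" using H0i by simp
    show "AE x in lborel. (\<lambda>n. H0 x * complex_of_real (\<phi> n (cis x))) \<longlonglongrightarrow> H0 x * complex_of_real (indicator S x)"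
    proof (rule AE_I2)
      fix x
      show "(\<lambda>n. H0 x * complex_of_real (\<phi> n (cis x))) \<longlonglongrightarrow> H0 x * complex_of_real (indicator S x)"
      proof (cases "x \<in> S")
        case True
        then have "0 < min 1 (max 0 (cos (x - th) - c))" unfolding S_def by simp
        from LIMSEQ_root_const[OF this]
        have lim1: "(\<lambda>n. \<phi> n (cis x)) \<longlonglongrightarrow> 1" unfolding phicis .
        have "(\<lambda>n. H0 x * of_real (\<phi> n (cis x))) \<longlonglongrightarrow> H0 x * of_real 1"
          using tendsto_mult[OF tendsto_const[of "H0 x"] tendsto_of_real[OF lim1]] by simp
        then show ?thesis using True by simp
      next
        case False
        then have "\<phi> n (cis x) = 0" for n unfolding phicis S_def by simp
        then show ?thesis using False by simp
      qed
    qed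
    show "AE x in lborel. norm (H0 x * complex_of_real (\<phi> n (cis x))) \<le> norm (H0 x)" for n
    proof (rule AE_I2)
      fix x
      have "0 \<le> \<phi> n (cis x) \<and> \<phi> n (cis x) \<le> 1" unfolding phicis by (rule rb) auto
      then show "norm (H0 x * complex_of_real (\<phi> n (cis x))) \<le> norm (H0 x)"
        by (simp add: norm_mult mult_left_le)
    qed
  qed
  then have "integral\<^sup>L lborel (\<lambda>x. H0 x * of_real (indicator S x)) = 0"
  proof -
    have "(\<lambda>n. 0::complex) \<longlonglongrightarrow> integral\<^sup>L lborel (\<lambda>x. H0 x * of_real (indicator S x))"
      using lim unfolding zero .
    then show ?thesis by (simp add: LIMSEQ_const_iff)
  qed
  moreover have "H0 x * of_real (indicator S x) = indicator {a<..<pi} x *\<^sub>R h x" for x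
  proof (cases "-pi \<le> x \<and> x \<le> pi")
    case True
    then have "x \<in> S \<longleftrightarrow> a < x \<and> x < pi"
      unfolding S_def c_def th_def using cap_set[OF a] by blast
    then show ?thesis using True unfolding H0_def by (auto simp: indicator_def)
  next
    case False
    then have "\<not> (a < x \<and> x < pi)" using a by auto
    then show ?thesis using False unfolding H0_def by (auto simp: indicator_def)
  qed
  ultimately show ?thesis unfolding set_lebesgue_integral_def by simp
qed


lemma ennreal_eq_neg: fixes y :: real assumes e: "ennreal y = ennreal (- y)" shows "y = 0"
proof (rule ccontr)
  assume "y \<noteq> 0"
  then have "y > 0 \<or> y < 0" by auto
  then show False
  proof
    assume y: "y > 0" then have "ennreal (- y) = 0" by (intro ennreal_neg) simp
    then have "ennreal y = 0" using e by simp
    then have "y \<le> 0" by (simp only: ennreal_eq_0_iff)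
    then show False using y by simp
  next
    assume y: "y < 0" then have "ennreal y = 0" by (intro ennreal_neg) simp
    then have "ennreal (-y) = 0" using e by simp
    then have "-y \<le> 0" by (simp only: ennreal_eq_0_iff)
    then show False using y by simp
  qed
qed
lemma enn2real_inj_fin: fixes a b :: ennreal assumes "enn2real a = enn2real b" "a \<noteq> \<infinity>" "b \<noteq> \<infinity>" shows "a = b"
proof -
  have "a = ennreal (enn2real a)" using assms(2) by (simp add: less_top)
  also have "\<dots> = ennreal (enn2real b)" using assms(1) by simp
  also have "\<dots> = b" using assms(3) by (simp add: less_top)
  finally show ?thesis .
qed

lemma ae_zero_real:
  fixes r :: "real \<Rightarrow> real"
  assumes r: "set_integrable lborel {-pi..pi} r"
    and tot: "(LINT x:{-pi..pi}|lborel. r x) = 0"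
    and part: "\<And>a. -pi < a \<Longrightarrow> a < pi \<Longrightarrow> (LINT x:{a<..<pi}|lborel. r x) = 0"
  shows "AE x in lborel. x \<in> {-pi..pi} \<longrightarrow> r x = 0"
proof -
  define g where "g x = indicator {-pi..pi} x * r x" for x
  have gi: "integrable lborel g" using r unfolding set_integrable_def g_def by simp
  have gm[measurable]: "g \<in> borel_measurable lborel" using gi by (rule borel_measurable_integrable)
  have gb: "integrable lborel (\<lambda>x. indicator {b<..} x * g x)" for b
    using integrable_real_mult_indicator[OF _ gi, of "{b<..}"] by (simp add: mult.commute)
  have int0: "integral\<^sup>L lborel (\<lambda>x. indicator {b<..} x * g x) = 0" for b
  proof -
    consider "b < -pi" | "-pi \<le> b" "b < pi" | "pi \<le> b" by linarith
    then show ?thesis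
    proof cases
      case 1
      then have "indicator {b<..} x * g x = g x" for x
        unfolding g_def by (auto simp: indicator_def)
      then have "(\<lambda>x. indicator {b<..} x * g x) = g" by (rule ext)
      then show ?thesis using tot unfolding g_def set_lebesgue_integral_def by simp
    next
      case 2
      have eq: "indicator {b<..} x * g x = indicator {b<..pi} x * r x" for x
        using 2 unfolding g_def by (auto simp: indicator_def)
      have "integral\<^sup>L lborel (\<lambda>x. indicator {b<..} x * g x) = (LINT x:{b<..pi}|lborel. r x)"
        unfolding eq set_lebesgue_integral_def by simp
      also have "\<dots> = 0"
      proof (cases "b = -pi")
        case True
        have "(LINT x:{b<..pi}|lborel. r x) = (LINT x:{-pi..pi}|lborel. r x)"
          using True by (intro set_integral_discrete_difference[where X="{-pi}"]) auto
        then show ?thesis using tot by simp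
      next
        case False
        then have b: "-pi < b" using 2 by simp
        have "(LINT x:{b<..pi}|lborel. r x) = (LINT x:{b<..<pi}|lborel. r x)"
          by (intro set_integral_discrete_difference[where X="{pi}"]) auto
        then show ?thesis using part[OF b] 2 by simp
      qed
      finally show ?thesis .
    next
      case 3
      then have "indicator {b<..} x * g x = 0" for x
        unfolding g_def by (auto simp: indicator_def)
      then have "(\<lambda>x. indicator {b<..} x * g x) = (\<lambda>x. 0)" by (rule ext)
      then show ?thesis by simp
    qed
  qed
  define M1 where "M1 = density lborel (\<lambda>x. ennreal (g x))"
  define M2 where "M2 = density lborel (\<lambda>x. ennreal (- g x))"
  have em1: "emeasure M1 {b<..} = (\<integral>\<^sup>+ x. ennreal (indicator {b<..} x * g x) \<partial>lborel)" for b
  proof -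
    have "emeasure M1 {b<..} = (\<integral>\<^sup>+ x. ennreal (g x) * indicator {b<..} x \<partial>lborel)"
      unfolding M1_def by (rule emeasure_density) auto
    also have "\<dots> = (\<integral>\<^sup>+ x. ennreal (indicator {b<..} x * g x) \<partial>lborel)"
      by (rule nn_integral_cong) (simp add: indicator_def)
    finally show ?thesis .
  qed
  have em2: "emeasure M2 {b<..} = (\<integral>\<^sup>+ x. ennreal (- (indicator {b<..} x * g x)) \<partial>lborel)" for b
  proof -
    have "emeasure M2 {b<..} = (\<integral>\<^sup>+ x. ennreal (- g x) * indicator {b<..} x \<partial>lborel)"
      unfolding M2_def by (rule emeasure_density) auto
    also have "\<dots> = (\<integral>\<^sup>+ x. ennreal (- (indicator {b<..} x * g x)) \<partial>lborel)"
      by (rule nn_integral_cong) (simp add: indicator_def)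
    finally show ?thesis .
  qed
  have "M1 = M2"
  proof (rule measure_eqI_lessThan)
    show "sets M1 = sets borel" "sets M2 = sets borel" unfolding M1_def M2_def by simp_all
    fix b
    have f1: "(\<integral>\<^sup>+ x. ennreal (indicator {b<..} x * g x) \<partial>lborel) \<noteq> \<infinity>"
      using integrableD(2)[OF gb[of b]] .
    have f2: "(\<integral>\<^sup>+ x. ennreal (- (indicator {b<..} x * g x)) \<partial>lborel) \<noteq> \<infinity>"
      using integrableD(3)[OF gb[of b]] .
    show "emeasure M1 {b<..} < \<infinity>" unfolding em1 using f1 by (simp add: less_top)
    have "enn2real (\<integral>\<^sup>+ x. ennreal (indicator {b<..} x * g x) \<partial>lborel)
        = enn2real (\<integral>\<^sup>+ x. ennreal (- (indicator {b<..} x * g x)) \<partial>lborel)"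
      using real_lebesgue_integral_def[OF gb[of b]] int0[of b] by simp
    then have "(\<integral>\<^sup>+ x. ennreal (indicator {b<..} x * g x) \<partial>lborel)
        = (\<integral>\<^sup>+ x. ennreal (- (indicator {b<..} x * g x)) \<partial>lborel)"
      using f1 f2 by (rule enn2real_inj_fin)
    then show "emeasure M1 {b<..} = emeasure M2 {b<..}" unfolding em1 em2 .
  qed
  then have "AE x in lborel. ennreal (g x) = ennreal (- g x)"
    unfolding M1_def M2_def by (intro sigma_finite_measure.density_unique[OF sigma_finite_lborel]) auto
  then show ?thesis
  proof (rule AE_mp, intro AE_I2 impI)
    fix x assume e: "ennreal (g x) = ennreal (- g x)" and x: "x \<in> {-pi..pi}"
    have "g x = 0" using e by (rule ennreal_eq_neg)
    then show "r x = 0" using x unfolding g_def by simp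
  qed
qed

theorem uniqueness:
  fixes h :: "real \<Rightarrow> complex"
  assumes h: "set_integrable lborel {-pi..pi} h"
    and orth: "\<And>k. (LINT x:{-pi..pi}|lborel. h x * E k x) = 0"
  shows "AE x in lborel. x \<in> {-pi..pi} \<longrightarrow> h x = 0"
proof -
  have tot: "(LINT x:{-pi..pi}|lborel. h x) = 0" using orth[of 0] by simp
  have part: "\<And>a. -pi < a \<Longrightarrow> a < pi \<Longrightarrow> (LINT x:{a<..<pi}|lborel. h x) = 0"
    using orth_Ioo[OF h orth] by blast
  have reRe: "(LINT x:A|lborel. Re (h x)) = Re (LINT x:A|lborel. h x)" if hA: "set_integrable lborel A h" for A
  proof -
    have "(LINT x:A|lborel. Re (h x)) = integral\<^sup>L lborel (\<lambda>x. Re (indicator A x *\<^sub>R h x))"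
      unfolding set_lebesgue_integral_def by (intro Bochner_Integration.integral_cong) (auto simp: indicator_def)
    also have "\<dots> = Re (LINT x:A|lborel. h x)"
      using hA unfolding set_lebesgue_integral_def set_integrable_def by (rule integral_Re)
    finally show ?thesis .
  qed
  have reIm: "(LINT x:A|lborel. Im (h x)) = Im (LINT x:A|lborel. h x)" if hA: "set_integrable lborel A h" for A
  proof -
    have "(LINT x:A|lborel. Im (h x)) = integral\<^sup>L lborel (\<lambda>x. Im (indicator A x *\<^sub>R h x))"
      unfolding set_lebesgue_integral_def by (intro Bochner_Integration.integral_cong) (auto simp: indicator_def)
    also have "\<dots> = Im (LINT x:A|lborel. h x)"
      using hA unfolding set_lebesgue_integral_def set_integrable_def by (rule integral_Im)
    finally show ?thesis .
  qed
  have hRe: "set_integrable lborel {-pi..pi} (\<lambda>x. Re (h x))"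
  proof -
    have "integrable lborel (\<lambda>x. Re (indicator {-pi..pi} x *\<^sub>R h x))"
      using h unfolding set_integrable_def by (rule integrable_Re)
    moreover have "(\<lambda>x. Re (indicator {-pi..pi} x *\<^sub>R h x)) = (\<lambda>x. indicator {-pi..pi} x *\<^sub>R Re (h x))"
      by (auto simp: indicator_def)
    ultimately show ?thesis unfolding set_integrable_def by simp
  qed
  have hIm: "set_integrable lborel {-pi..pi} (\<lambda>x. Im (h x))"
  proof -
    have "integrable lborel (\<lambda>x. Im (indicator {-pi..pi} x *\<^sub>R h x))"
      using h unfolding set_integrable_def by (rule integrable_Im)
    moreover have "(\<lambda>x. Im (indicator {-pi..pi} x *\<^sub>R h x)) = (\<lambda>x. indicator {-pi..pi} x *\<^sub>R Im (h x))"
      by (auto simp: indicator_def)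
    ultimately show ?thesis unfolding set_integrable_def by simp
  qed
  have hsub: "set_integrable lborel {a<..<pi} h" if "-pi < a" for a
    by (rule set_integrable_subset[OF h]) (use that in auto)
  have A1: "AE x in lborel. x \<in> {-pi..pi} \<longrightarrow> Re (h x) = 0"
  proof (rule ae_zero_real[OF hRe])
    show "(LINT x:{-pi..pi}|lborel. Re (h x)) = 0" using reRe[OF h] tot by simp
    fix a :: real assume a: "-pi < a" "a < pi"
    show "(LINT x:{a<..<pi}|lborel. Re (h x)) = 0" using reRe[OF hsub[OF a(1)]] part[OF a] by simp
  qed
  have A2: "AE x in lborel. x \<in> {-pi..pi} \<longrightarrow> Im (h x) = 0"
  proof (rule ae_zero_real[OF hIm])
    show "(LINT x:{-pi..pi}|lborel. Im (h x)) = 0" using reIm[OF h] tot by simp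
    fix a :: real assume a: "-pi < a" "a < pi"
    show "(LINT x:{a<..<pi}|lborel. Im (h x)) = 0" using reIm[OF hsub[OF a(1)]] part[OF a] by simp
  qed
  from A1 A2 show ?thesis by eventually_elim (simp add: complex_eq_iff)
qed


lemma E_cis: "E l x = cis (of_int l * x)"
  by (simp add: E_def cis_conv_exp mult.assoc)

lemma E_pow: "E l x ^ i = E (l * int i) x"
  by (induction i) (auto simp: E_mult[symmetric] algebra_simps)

lemma sin_lower:
  fixes y :: real
  assumes "\<bar>y\<bar> \<le> pi/2"
  shows "\<bar>y\<bar>/2 \<le> \<bar>sin y\<bar>"
proof -
  have s: "(\<Sum>m<3. sin_coeff m * y ^ m) = y"
    by (simp add: sin_coeff_def eval_nat_numeral)
  have b: "\<bar>sin y - y\<bar> \<le> \<bar>y\<bar> ^ 3 / 6"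
    using Maclaurin_sin_bound[of y 3] unfolding s by (simp add: eval_nat_numeral divide_simps)
  have pi2: "pi/2 \<le> 1.6" using pi_approx by simp
  have "\<bar>y\<bar>^2 \<le> 1.6^2" using assms pi2 by (intro power_mono) auto
  moreover have "(1.6::real)^2 \<le> 3" by (simp add: power2_eq_square)
  ultimately have y2: "\<bar>y\<bar>^2 \<le> 3" by linarith
  have "\<bar>y\<bar> ^ 3 / 6 = \<bar>y\<bar> * \<bar>y\<bar>^2 / 6" by (simp add: eval_nat_numeral)
  also have "\<dots> \<le> \<bar>y\<bar> * 3 / 6" using y2 by (intro divide_right_mono mult_left_mono) auto
  finally have "\<bar>sin y - y\<bar> \<le> \<bar>y\<bar> / 2" using b by simp
  then show ?thesis by linarith
qed

lemma norm_1_cis_sq: "norm (1 - cis x) ^ 2 = 4 * sin (x/2) ^ 2"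
proof -
  have "norm (1 - cis x) ^ 2 = (1 - cos x)^2 + (sin x)^2"
    by (simp add: cmod_power2)
  also have "\<dots> = 2 - 2 * cos x"
    using sin_cos_squared_add[of x] by (simp add: power2_eq_square algebra_simps)
  also have "cos x = 1 - 2 * sin (x/2) ^ 2"
    using cos_double_sin[of "x/2"] by simp
  finally show ?thesis by simp
qed

lemma norm_1_cis_lower:
  assumes "\<bar>x\<bar> \<le> pi"
  shows "\<bar>x\<bar>/2 \<le> norm (1 - cis x)"
proof -
  have "\<bar>x/2\<bar>/2 \<le> \<bar>sin (x/2)\<bar>" using assms by (intro sin_lower) auto
  then have "(\<bar>x\<bar>/4)^2 \<le> \<bar>sin (x/2)\<bar>^2" by (intro power_mono) auto
  then have "(\<bar>x\<bar>/2)^2 \<le> norm (1 - cis x) ^ 2"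
    unfolding norm_1_cis_sq by (simp add: power2_eq_square)
  then show ?thesis by (rule power2_le_imp_le) simp
qed

lemma norm_1_cis_upper: "norm (1 - cis x) \<le> \<bar>x\<bar>"
proof -
  have "\<bar>sin (x/2)\<bar> \<le> \<bar>x/2\<bar>" by (rule abs_sin_x_le_abs_x)
  then have "\<bar>sin (x/2)\<bar>^2 \<le> \<bar>x/2\<bar>^2" by (intro power_mono) auto
  then have "norm (1 - cis x) ^ 2 \<le> \<bar>x\<bar>^2"
    unfolding norm_1_cis_sq by (simp add: power2_eq_square)
  then show ?thesis by (rule power2_le_imp_le) simp
qed

lemma geom_bound:
  assumes "x \<noteq> 0" "\<bar>x\<bar> \<le> pi"
  shows "norm (\<Sum>i<m. cis x ^ i) \<le> 4 / \<bar>x\<bar>"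
proof -
  have pos: "\<bar>x\<bar>/2 \<le> norm (1 - cis x)" using assms by (intro norm_1_cis_lower)
  then have ne: "cis x \<noteq> 1" using assms by auto
  have np: "0 < norm (1 - cis x)" using pos assms by linarith
  have "(\<Sum>i<m. cis x ^ i) = (cis x ^ m - 1) / (cis x - 1)" by (rule geometric_sum[OF ne])
  then have "norm (\<Sum>i<m. cis x ^ i) = norm (cis x ^ m - 1) / norm (1 - cis x)"
    by (simp add: norm_divide norm_minus_commute)
  also have "\<dots> \<le> 2 / norm (1 - cis x)"
  proof (rule divide_right_mono)
    have "norm (cis x ^ m - 1) \<le> norm (cis x ^ m) + norm (1::complex)" by (rule norm_triangle_ineq4)
    then show "norm (cis x ^ m - 1) \<le> 2" by (simp add: norm_power)
  qed simp
  also have "\<dots> \<le> 2 / (\<bar>x\<bar>/2)" by (intro divide_left_mono) (use pos np assms in auto)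
  also have "\<dots> = 4 / \<bar>x\<bar>" by simp
  finally show ?thesis .
qed

lemma geom_bound2: "norm (\<Sum>i<m. cis x ^ i) \<le> real m"
proof -
  have "norm (\<Sum>i<m. cis x ^ i) \<le> (\<Sum>i<m. norm (cis x ^ i))" by (rule norm_sum)
  also have "\<dots> = real m" by (simp add: norm_power)
  finally show ?thesis .
qed

definition K :: "int \<Rightarrow> real \<Rightarrow> complex" where
  "K n x = (if 0 \<le> n then (\<Sum>i<nat n + 1. E (int i) x) else (\<Sum>i<nat (-n). E (- int i - 1) x))"

lemma K_cont: "continuous_on S (K n)"
  unfolding K_def by (cases "0 \<le> n") (auto intro!: continuous_intros)

lemma K_bound:
  assumes "x \<noteq> 0" "\<bar>x\<bar> \<le> pi"
  shows "norm (K n x) \<le> min (real_of_int \<bar>n\<bar> + 1) (4 / \<bar>x\<bar>)"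
proof (cases "0 \<le> n")
  case True
  have Ei: "E (int i) x = cis x ^ i" for i by (simp only: E_cis of_int_of_nat_eq Complex.DeMoivre)
  have eq: "K n x = (\<Sum>i<nat n + 1. cis x ^ i)"
    using True unfolding K_def Ei by simp
  show ?thesis using geom_bound[OF assms, of "nat n + 1"] geom_bound2[of x "nat n + 1"] True
    unfolding eq by simp
next
  case False
  have En: "E (- int i - 1) x = cis (-x) * cis (-x) ^ i" for i
    by (simp add: E_cis Complex.DeMoivre cis_mult algebra_simps) (simp add: arg_cong[where f=cis] algebra_simps)
  have eq: "K n x = cis (-x) * (\<Sum>i<nat (-n). cis (-x) ^ i)"
    using False unfolding K_def En sum_distrib_left[symmetric] by simp
  have a2: "-x \<noteq> 0" "\<bar>-x\<bar> \<le> pi" using assms by auto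
  show ?thesis using geom_bound[OF a2, of "nat (-n)"] geom_bound2[of "-x" "nat (-n)"] False
    unfolding eq by (simp add: norm_mult)
qed


definition Blk :: "nat \<Rightarrow> int set" where
  "Blk k = {m::int. \<lfloor>(2::real) powr (real k - 1)\<rfloor> \<le> \<bar>m\<bar> \<and> \<bar>m\<bar> < 2 ^ k}"

lemma Theta_Blk: "Theta f k = (\<Sum>m\<in>Blk k. delta_coeff f m)"
  unfolding Theta_def Blk_def ..

lemma Blk_0: "Blk 0 = {0}"
proof -
  have "\<lfloor>(2::real) powr (real 0 - 1)\<rfloor> = 0"
    by (simp add: powr_minus_divide)
  then show ?thesis unfolding Blk_def by auto
qed

lemma Blk_Suc: "Blk (Suc k) = {m. 2^k \<le> \<bar>m\<bar> \<and> \<bar>m\<bar> < 2 ^ Suc k}"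
proof -
  have "(2::real) powr (real (Suc k) - 1) = of_int (2^k)"
    by (simp add: powr_realpow)
  then have "\<lfloor>(2::real) powr (real (Suc k) - 1)\<rfloor> = 2^k"
    by (simp only: floor_of_int)
  then show ?thesis unfolding Blk_def by simp
qed

lemma Blk_finite[simp]: "finite (Blk k)"
proof -
  have "Blk k \<subseteq> {-(2^k)..2^k}" unfolding Blk_def by auto
  then show ?thesis by (rule finite_subset) simp
qed

lemma Blk_bound: "n \<in> Blk k \<Longrightarrow> \<bar>n\<bar> + 1 \<le> 2 ^ k"
  unfolding Blk_def by simp

lemma Blk_lower: "n \<in> Blk (Suc k) \<Longrightarrow> 2^k \<le> \<bar>n\<bar>"
  unfolding Blk_Suc by simp

lemma Blk_disj:
  assumes "k < k'"
  shows "Blk k \<inter> Blk k' = {}"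
proof -
  obtain k'' where k': "k' = Suc k''" and "k \<le> k''" using assms by (cases k') auto
  then have "(2::int)^k \<le> 2^k''" by (intro power_increasing) auto
  show ?thesis
  proof (rule ccontr)
    assume "Blk k \<inter> Blk k' \<noteq> {}"
    then obtain n where n1: "n \<in> Blk k" and n2: "n \<in> Blk (Suc k'')" unfolding k' by blast
    have "\<bar>n\<bar> + 1 \<le> 2 ^ k" by (rule Blk_bound[OF n1])
    moreover have "2 ^ k'' \<le> \<bar>n\<bar>" by (rule Blk_lower[OF n2])
    ultimately show False using \<open>(2::int)^k \<le> 2^k''\<close> by linarith
  qed
qed

definition Iset :: "nat \<Rightarrow> int set" where
  "Iset N = {m::int. \<bar>m\<bar> < 2 ^ N}"

lemma Iset_union: "Iset N = (\<Union>k\<le>N. Blk k)"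
proof (induction N)
  case 0
  then show ?case unfolding Iset_def by (auto simp: Blk_0)
next
  case (Suc N)
  have "Iset (Suc N) = Iset N \<union> Blk (Suc N)"
    unfolding Iset_def Blk_Suc by auto
  also have "\<dots> = (\<Union>k\<le>Suc N. Blk k)" using Suc by (auto simp: atMost_Suc)
  finally show ?case .
qed

lemma Iset_finite[simp]: "finite (Iset N)"
  unfolding Iset_union by auto

lemma sum_Iset: "(\<Sum>n\<in>Iset N. F n) = (\<Sum>k\<le>N. \<Sum>n\<in>Blk k. F n)"
  unfolding Iset_union
proof (rule sum.UNION_disjoint)
  show "\<forall>i\<in>{..N}. \<forall>j\<in>{..N}. i \<noteq> j \<longrightarrow> Blk i \<inter> Blk j = {}"
    using Blk_disj by (metis Int_commute linorder_neq_iff)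
qed auto

definition dl :: "(real \<Rightarrow> complex) \<Rightarrow> int \<Rightarrow> complex" where
  "dl f n = (if 0 \<le> n then fourier_coeff f n - fourier_coeff f (n+1)
             else fourier_coeff f n - fourier_coeff f (n-1))"

lemma dl_bound: "norm (dl f n) \<le> delta_coeff f n"
  unfolding dl_def delta_coeff_def by auto

lemma delta_nonneg: "0 \<le> delta_coeff f n"
  unfolding delta_coeff_def by auto

lemma Theta_nonneg: "0 \<le> Theta f k"
  unfolding Theta_Blk by (intro sum_nonneg delta_nonneg)

definition bt :: "(real \<Rightarrow> complex) \<Rightarrow> nat \<Rightarrow> real \<Rightarrow> complex" where
  "bt f k x = (\<Sum>n\<in>Blk k. dl f n * K n x)"

lemma bt_cont: "continuous_on S (bt f k)"
  unfolding bt_def by (intro continuous_intros continuous_on_sum K_cont)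

lemma bt_bound:
  assumes "x \<noteq> 0" "\<bar>x\<bar> \<le> pi"
  shows "norm (bt f k x) \<le> Theta f k * min (2^k) (4 / \<bar>x\<bar>)"
proof -
  have "norm (bt f k x) \<le> (\<Sum>n\<in>Blk k. norm (dl f n * K n x))"
    unfolding bt_def by (rule norm_sum)
  also have "\<dots> \<le> (\<Sum>n\<in>Blk k. delta_coeff f n * min (2^k) (4 / \<bar>x\<bar>))"
  proof (rule sum_mono)
    fix n assume n: "n \<in> Blk k"
    have "real_of_int \<bar>n\<bar> + 1 \<le> 2^k"
    proof -
      have "real_of_int (\<bar>n\<bar> + 1) \<le> real_of_int (2^k)"
        using Blk_bound[OF n] by (simp only: of_int_le_iff)
      then show ?thesis by simp
    qed
    then have "norm (K n x) \<le> min (2^k) (4 / \<bar>x\<bar>)"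
      using K_bound[OF assms, of n] by linarith
    then show "norm (dl f n * K n x) \<le> delta_coeff f n * min (2^k) (4 / \<bar>x\<bar>)"
      unfolding norm_mult by (intro mult_mono dl_bound) (auto simp: delta_nonneg)
  qed
  also have "\<dots> = Theta f k * min (2^k) (4 / \<bar>x\<bar>)"
    unfolding Theta_Blk by (simp add: sum_distrib_right)
  finally show ?thesis .
qed

definition gN :: "(real \<Rightarrow> complex) \<Rightarrow> nat \<Rightarrow> real \<Rightarrow> complex" where
  "gN f N x = (\<Sum>k\<le>N. bt f k x)"

lemma gN_Iset: "gN f N x = (\<Sum>n\<in>Iset N. dl f n * K n x)"
  unfolding gN_def bt_def sum_Iset ..

lemma gN_cont: "continuous_on S (gN f N)"
  unfolding gN_def by (intro continuous_on_sum bt_cont)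


lemma set_int_sum_cont:
  fixes F :: "'i \<Rightarrow> real \<Rightarrow> complex"
  assumes "finite I" "\<And>i. i \<in> I \<Longrightarrow> continuous_on {-pi..pi} (F i)"
  shows "(LINT x:{-pi..pi}|lborel. (\<Sum>i\<in>I. F i x)) = (\<Sum>i\<in>I. (LINT x:{-pi..pi}|lborel. F i x))"
proof -
  have int: "integrable lborel (\<lambda>x. indicator {-pi..pi} x *\<^sub>R F i x)" if "i \<in> I" for i
    using borel_integrable_atLeastAtMost'[OF assms(2)[OF that]] unfolding set_integrable_def .
  have "(LINT x:{-pi..pi}|lborel. (\<Sum>i\<in>I. F i x)) = integral\<^sup>L lborel (\<lambda>x. \<Sum>i\<in>I. indicator {-pi..pi} x *\<^sub>R F i x)"
    unfolding set_lebesgue_integral_def by (simp add: scaleR_sum_right)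
  also have "\<dots> = (\<Sum>i\<in>I. integral\<^sup>L lborel (\<lambda>x. indicator {-pi..pi} x *\<^sub>R F i x))"
    by (rule Bochner_Integration.integral_sum) (use int in auto)
  finally show ?thesis unfolding set_lebesgue_integral_def .
qed

lemma sum_ind_int:
  fixes c :: "'a::comm_monoid_add"
  shows "(\<Sum>i<m. (if int i = j then c else 0)) = (if 0 \<le> j \<and> j < int m then c else 0)"
proof (cases "0 \<le> j")
  case True
  have "(\<Sum>i<m. (if int i = j then c else 0)) = (\<Sum>i<m. (if i = nat j then c else 0))"
    using True by (intro sum.cong) auto
  also have "\<dots> = (if nat j \<in> {..<m} then c else 0)" by simp
  finally show ?thesis using True by auto
next
  case False
  then show ?thesis by (intro trans[OF sum.neutral]) auto
qed

definition chi :: "int \<Rightarrow> int \<Rightarrow> complex" where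
  "chi n j = (if 0 \<le> n then (if 0 \<le> j \<and> j \<le> n then 1 else 0) else (if n \<le> j \<and> j \<le> -1 then 1 else 0))"

lemma int_K_E: "(LINT x:{-pi..pi}|lborel. K n x * E (-j) x) = 2 * pi * chi n j"
proof (cases "0 \<le> n")
  case True
  have eqK: "K n x * E (-j) x = (\<Sum>i<nat n + 1. E (int i - j) x)" for x
    unfolding K_def if_P[OF True] sum_distrib_right E_mult by simp
  have "(LINT x:{-pi..pi}|lborel. K n x * E (-j) x) = (LINT x:{-pi..pi}|lborel. (\<Sum>i<nat n + 1. E (int i - j) x))"
    by (simp only: eqK)
  also have "\<dots> = (\<Sum>i<nat n + 1. (LINT x:{-pi..pi}|lborel. E (int i - j) x))"
    by (rule set_int_sum_cont) (auto intro: E_cont)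
  also have "\<dots> = (\<Sum>i<nat n + 1. (if int i = j then complex_of_real (2 * pi) else 0))"
    unfolding int_E by (intro sum.cong) auto
  also have "\<dots> = (if 0 \<le> j \<and> j < int (nat n + 1) then complex_of_real (2 * pi) else 0)"
    by (rule sum_ind_int)
  also have "\<dots> = 2 * pi * chi n j" using True unfolding chi_def by auto
  finally show ?thesis .
next
  case False
  have eqK: "K n x * E (-j) x = (\<Sum>i<nat (-n). E (- int i - 1 - j) x)" for x
    unfolding K_def if_not_P[OF False] sum_distrib_right E_mult by simp
  have "(LINT x:{-pi..pi}|lborel. K n x * E (-j) x) = (LINT x:{-pi..pi}|lborel. (\<Sum>i<nat (-n). E (- int i - 1 - j) x))"
    by (simp only: eqK)
  also have "\<dots> = (\<Sum>i<nat (-n). (LINT x:{-pi..pi}|lborel. E (- int i - 1 - j) x))"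
    by (rule set_int_sum_cont) (auto intro: E_cont)
  also have "\<dots> = (\<Sum>i<nat (-n). (if int i = -j-1 then complex_of_real (2 * pi) else 0))"
    unfolding int_E by (intro sum.cong) auto
  also have "\<dots> = (if 0 \<le> -j-1 \<and> -j-1 < int (nat (-n)) then complex_of_real (2 * pi) else 0)"
    by (rule sum_ind_int)
  also have "\<dots> = 2 * pi * chi n j" using False unfolding chi_def by auto
  finally show ?thesis .
qed

lemma int_gN_E: "(LINT x:{-pi..pi}|lborel. gN f N x * E (-j) x) = 2 * pi * (\<Sum>n\<in>Iset N. dl f n * chi n j)"
proof -
  have "(LINT x:{-pi..pi}|lborel. gN f N x * E (-j) x) = (LINT x:{-pi..pi}|lborel. (\<Sum>n\<in>Iset N. dl f n * (K n x * E (-j) x)))"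
    unfolding gN_Iset by (simp add: sum_distrib_right mult.assoc)
  also have "\<dots> = (\<Sum>n\<in>Iset N. (LINT x:{-pi..pi}|lborel. dl f n * (K n x * E (-j) x)))"
    by (rule set_int_sum_cont) (auto intro!: continuous_intros K_cont E_cont)
  also have "\<dots> = (\<Sum>n\<in>Iset N. dl f n * (2 * pi * chi n j))"
    by (simp add: int_K_E)
  finally show ?thesis by (simp add: sum_distrib_left algebra_simps)
qed

lemma tele_up:
  fixes b :: "int \<Rightarrow> complex"
  assumes "j \<le> M"
  shows "(\<Sum>n\<in>{j..<M}. b n - b (n+1)) = b j - b M"
proof -
  define m where "m = nat (M - j)"
  have M: "M = j + int m" using assms unfolding m_def by simp
  have "{j..<M} = (\<lambda>i. j + int i) ` {..<m}"
  proof (intro set_eqI iffI)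
    fix n assume "n \<in> {j..<M}"
    then have "n = j + int (nat (n - j))" "nat (n - j) < m" using M by auto
    then show "n \<in> (\<lambda>i. j + int i) ` {..<m}" by blast
  qed (auto simp: M)
  then have "(\<Sum>n\<in>{j..<M}. b n - b (n+1)) = (\<Sum>i<m. b (j + int i) - b (j + int (Suc i)))"
    by (simp add: sum.reindex inj_on_def algebra_simps)
  also have "\<dots> = b (j + int 0) - b (j + int m)"
    by (rule sum_lessThan_telescope')
  finally show ?thesis using M by simp
qed

lemma tele_down:
  fixes b :: "int \<Rightarrow> complex"
  assumes "M \<le> j"
  shows "(\<Sum>n\<in>{M<..j}. b n - b (n-1)) = b j - b M"
proof -
  define m where "m = nat (j - M)"
  have M: "M = j - int m" using assms unfolding m_def by simp
  have "{M<..j} = (\<lambda>i. j - int i) ` {..<m}"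
  proof (intro set_eqI iffI)
    fix n assume "n \<in> {M<..j}"
    then have "n = j - int (nat (j - n))" "nat (j - n) < m" using M by auto
    then show "n \<in> (\<lambda>i. j - int i) ` {..<m}" by blast
  qed (auto simp: M)
  then have "(\<Sum>n\<in>{M<..j}. b n - b (n-1)) = (\<Sum>i<m. b (j - int i) - b (j - int (Suc i)))"
    by (simp add: sum.reindex inj_on_def algebra_simps)
  also have "\<dots> = b (j - int 0) - b (j - int m)"
    by (rule sum_lessThan_telescope')
  finally show ?thesis using M by simp
qed

lemma coeff_gN_pos:
  assumes "0 \<le> j" "j < 2^N"
  shows "(\<Sum>n\<in>Iset N. dl f n * chi n j) = fourier_coeff f j - fourier_coeff f (2^N)"
proof -
  have "(\<Sum>n\<in>Iset N. dl f n * chi n j) = (\<Sum>n\<in>Iset N. if n \<in> {j..<2^N} then dl f n else 0)"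
    using assms by (intro sum.cong) (auto simp: chi_def Iset_def)
  also have "\<dots> = (\<Sum>n\<in>{j..<2^N}. dl f n)"
    by (rule sum.mono_neutral_cong_right) (use assms Iset_finite[of N, unfolded Iset_def] in \<open>auto simp: Iset_def\<close>)
  also have "\<dots> = (\<Sum>n\<in>{j..<2^N}. fourier_coeff f n - fourier_coeff f (n+1))"
    using assms by (intro sum.cong) (auto simp: dl_def)
  also have "\<dots> = fourier_coeff f j - fourier_coeff f (2^N)"
    using assms by (intro tele_up) simp
  finally show ?thesis .
qed

lemma coeff_gN_neg:
  assumes "j < 0" "- (2^N) < j"
  shows "(\<Sum>n\<in>Iset N. dl f n * chi n j) = fourier_coeff f j - fourier_coeff f (- (2^N))"
proof -
  have "(\<Sum>n\<in>Iset N. dl f n * chi n j) = (\<Sum>n\<in>Iset N. if n \<in> {- (2^N)<..j} then dl f n else 0)"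
    using assms by (intro sum.cong) (auto simp: chi_def Iset_def)
  also have "\<dots> = (\<Sum>n\<in>{- (2^N)<..j}. dl f n)"
    by (rule sum.mono_neutral_cong_right) (use assms Iset_finite[of N, unfolded Iset_def] in \<open>auto simp: Iset_def\<close>)
  also have "\<dots> = (\<Sum>n\<in>{- (2^N)<..j}. fourier_coeff f n - fourier_coeff f (n-1))"
    using assms by (intro sum.cong) (auto simp: dl_def)
  also have "\<dots> = fourier_coeff f j - fourier_coeff f (- (2^N))"
    using assms by (intro tele_down) simp
  finally show ?thesis .
qed


lemma jensen_powr:
  fixes a y :: "'i \<Rightarrow> real"
  assumes S: "finite S" and a: "\<And>i. i\<in>S \<Longrightarrow> 0 \<le> a i" and y: "\<And>i. i\<in>S \<Longrightarrow> 0 \<le> y i" and p: "1 \<le> p"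
  shows "(\<Sum>i\<in>S. a i * y i) powr p \<le> (\<Sum>i\<in>S. a i) powr (p-1) * (\<Sum>i\<in>S. a i * y i powr p)"
proof -
  define S' where "S' = {i\<in>S. 0 < a i \<and> 0 < y i}"
  have S'S: "S' \<subseteq> S" unfolding S'_def by auto
  have fS': "finite S'" using S S'S finite_subset by blast
  have eq1: "(\<Sum>i\<in>S. a i * y i) = (\<Sum>i\<in>S'. a i * y i)"
  proof (rule sum.mono_neutral_right[OF S S'S], rule ballI)
    fix i assume "i \<in> S - S'"
    then have "a i = 0 \<or> y i = 0" using a y unfolding S'_def by force
    then show "a i * y i = 0" by auto
  qed
  have le2: "(\<Sum>i\<in>S'. a i) \<le> (\<Sum>i\<in>S. a i)"
    by (rule sum_mono2[OF S S'S]) (use a in auto)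
  have le3: "(\<Sum>i\<in>S'. a i * y i powr p) \<le> (\<Sum>i\<in>S. a i * y i powr p)"
    by (rule sum_mono2[OF S S'S]) (use a in auto)
  have nn: "0 \<le> (\<Sum>i\<in>S. a i) powr (p-1) * (\<Sum>i\<in>S. a i * y i powr p)"
    using a by (intro mult_nonneg_nonneg sum_nonneg) auto
  show ?thesis
  proof (cases "S' = {}")
    case True
    then show ?thesis using eq1 nn by simp
  next
    case False
    define A where "A = (\<Sum>i\<in>S'. a i)"
    have A0: "0 < A" unfolding A_def using False fS' by (intro sum_pos) (auto simp: S'_def)
    have w1: "(\<Sum>i\<in>S'. a i / A) = 1" using A0 unfolding A_def by (simp add: sum_divide_distrib[symmetric])
    have cv: "(\<Sum>i\<in>S'. (a i / A) *\<^sub>R y i) powr p \<le> (\<Sum>i\<in>S'. (a i / A) * y i powr p)"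
      by (rule convex_on_sum[OF fS' False powr_convex[OF p] w1]) (use A0 in \<open>auto simp: S'_def\<close>)
    have "(\<Sum>i\<in>S. a i * y i) = A * (\<Sum>i\<in>S'. (a i / A) *\<^sub>R y i)"
      unfolding eq1 using A0 by (simp add: sum_distrib_left)
    then have "(\<Sum>i\<in>S. a i * y i) powr p = A powr p * (\<Sum>i\<in>S'. (a i / A) *\<^sub>R y i) powr p"
      using A0 y S'S by (simp add: powr_mult sum_nonneg subset_iff)
    also have "\<dots> \<le> A powr p * (\<Sum>i\<in>S'. (a i / A) * y i powr p)"
      using cv by (intro mult_left_mono) auto
    also have "\<dots> = A powr (p - 1) * (\<Sum>i\<in>S'. a i * y i powr p)"
    proof -
      have "A powr p = A powr ((p - 1) + 1)" by simp
      also have "\<dots> = A powr (p-1) * A powr 1" by (rule powr_add)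
      also have "A powr 1 = A" using A0 by simp
      finally have "A powr p = A powr (p-1) * A" .
      then show ?thesis using A0 by (simp add: sum_distrib_left)
    qed
    also have "\<dots> \<le> (\<Sum>i\<in>S. a i) powr (p-1) * (\<Sum>i\<in>S. a i * y i powr p)"
    proof (rule mult_mono)
      show "A powr (p - 1) \<le> (\<Sum>i\<in>S. a i) powr (p - 1)"
        unfolding A_def using le2 A0 p A_def by (intro powr_mono2) auto
      show "(\<Sum>i\<in>S'. a i * y i powr p) \<le> (\<Sum>i\<in>S. a i * y i powr p)" by (rule le3)
      show "0 \<le> (\<Sum>i\<in>S. a i) powr (p - 1)" by simp
      show "0 \<le> (\<Sum>i\<in>S'. a i * y i powr p)" using a S'S by (intro sum_nonneg) auto
    qed
    finally show ?thesis .
  qed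
qed

lemma geo_finite:
  fixes \<rho> :: real
  assumes "0 \<le> \<rho>" "\<rho> < 1" "finite S"
  shows "(\<Sum>i\<in>S. \<rho>^i) \<le> 1 / (1 - \<rho>)"
proof -
  have "(\<Sum>i\<in>S. \<rho>^i) \<le> (\<Sum>i. \<rho>^i)"
    by (rule sum_le_suminf) (use assms in auto)
  also have "\<dots> = 1 / (1 - \<rho>)" by (rule suminf_geometric) (use assms in auto)
  finally show ?thesis .
qed

definition dd :: "nat \<Rightarrow> nat \<Rightarrow> nat" where
  "dd j k = (if k \<le> j then j - k else k - j)"

lemma dd_sym: "dd j k = dd k j"
  unfolding dd_def by auto

lemma sum_rho_dd:
  fixes \<rho> :: real
  assumes r: "0 \<le> \<rho>" "\<rho> < 1" and A: "finite A"
  shows "(\<Sum>k\<in>A. \<rho>^(dd j k)) \<le> 2 / (1 - \<rho>)"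
proof -
  have split: "A = (A \<inter> {..j}) \<union> (A \<inter> {j<..})" by auto
  have "(\<Sum>k\<in>A. \<rho>^(dd j k)) = (\<Sum>k\<in>A \<inter> {..j}. \<rho>^(dd j k)) + (\<Sum>k\<in>A \<inter> {j<..}. \<rho>^(dd j k))"
    by (subst split, rule sum.union_disjoint) (use A in auto)
  also have "(\<Sum>k\<in>A \<inter> {..j}. \<rho>^(dd j k)) = (\<Sum>k\<in>A \<inter> {..j}. \<rho>^(j - k))"
    by (intro sum.cong) (auto simp: dd_def)
  also have "\<dots> = (\<Sum>d\<in>(\<lambda>k. j - k) ` (A \<inter> {..j}). \<rho>^d)"
    by (subst sum.reindex) (auto simp: inj_on_def)
  also have "(\<Sum>k\<in>A \<inter> {j<..}. \<rho>^(dd j k)) = (\<Sum>k\<in>A \<inter> {j<..}. \<rho>^(k - j))"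
    by (intro sum.cong) (auto simp: dd_def)
  also have "\<dots> = (\<Sum>d\<in>(\<lambda>k. k - j) ` (A \<inter> {j<..}). \<rho>^d)"
    by (subst sum.reindex) (auto simp: inj_on_def)
  also have "(\<Sum>d\<in>(\<lambda>k. j - k) ` (A \<inter> {..j}). \<rho>^d) + (\<Sum>d\<in>(\<lambda>k. k - j) ` (A \<inter> {j<..}). \<rho>^d)
      \<le> 1 / (1 - \<rho>) + 1 / (1 - \<rho>)"
    by (intro add_mono geo_finite) (use r A in auto)
  also have "\<dots> = 2 / (1 - \<rho>)" by simp
  finally show ?thesis .
qed

lemma exp_bound:
  fixes p :: real
  assumes p: "1 < p"
  shows "real (min k j) - real j / p - real k * (1 - 1/p) \<le> - min (1/p) (1 - 1/p) * real (dd j k)"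
proof (cases "k \<le> j")
  case True
  have "min (1/p) (1 - 1/p) * real (j - k) \<le> (1/p) * real (j - k)"
    by (intro mult_right_mono) auto
  moreover have "real (min k j) - real j / p - real k * (1 - 1/p) = - ((1/p) * real (j - k))"
    using True by (simp add: of_nat_diff algebra_simps)
  ultimately show ?thesis using True by (simp add: dd_def)
next
  case False
  have "min (1/p) (1 - 1/p) * real (k - j) \<le> (1 - 1/p) * real (k - j)"
    by (intro mult_right_mono) auto
  moreover have "real (min k j) - real j / p - real k * (1 - 1/p) = - ((1 - 1/p) * real (k - j))"
    using False by (simp add: of_nat_diff algebra_simps)
  ultimately show ?thesis using False by (simp add: dd_def)
qed


locale discr =
  fixes p :: real and t :: "nat \<Rightarrow> real" and N :: nat
  assumes p: "1 < p" and t: "\<And>k. 0 \<le> t k"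
begin

definition "m = min (1/p) (1 - 1/p)"
definition "\<rho> = (2::real) powr (- m)"
definition "W = 2 / (1 - \<rho>)"
definition "u k = 2 powr (real k * (1 - 1/p)) * t k"
definition "S j = (\<Sum>k\<le>N. t k * 2 ^ (min k j))"

lemma m_pos: "0 < m" unfolding m_def using p by (auto simp: field_simps)
lemma rho: "0 < \<rho>" "\<rho> < 1" unfolding \<rho>_def using m_pos by (auto intro: powr_less_one)
lemma W_pos: "0 < W" unfolding W_def using rho by auto
lemma u_nonneg: "0 \<le> u k" unfolding u_def using t by simp
lemma S_nonneg: "0 \<le> S j" unfolding S_def using t by (intro sum_nonneg) auto

lemma rho_pow: "\<rho> ^ n = 2 powr (- m * real n)"
  unfolding \<rho>_def by (simp add: powr_power mult.commute)

lemma S_bound: "2 powr (- real j / p) * S j \<le> (\<Sum>k\<le>N. \<rho> ^ (dd j k) * u k)"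
proof -
  have "2 powr (- real j / p) * S j = (\<Sum>k\<le>N. t k * 2 powr (real (min k j) - real j / p))"
    unfolding S_def sum_distrib_left
    by (intro sum.cong) (simp_all add: powr_diff powr_realpow powr_minus divide_inverse mult.commute)
  also have "\<dots> \<le> (\<Sum>k\<le>N. t k * (2 powr (- m * real (dd j k)) * 2 powr (real k * (1 - 1/p))))"
  proof (rule sum_mono, rule mult_left_mono)
    fix k
    have "(2::real) powr (real (min k j) - real j / p) \<le> 2 powr (- m * real (dd j k) + real k * (1 - 1 / p))"
      using exp_bound[OF p, of k j] unfolding m_def by (intro powr_mono) auto
    also have "\<dots> = 2 powr (- m * real (dd j k)) * 2 powr (real k * (1 - 1 / p))" by (rule powr_add)
    finally show "(2::real) powr (real (min k j) - real j / p) \<le> 2 powr (- m * real (dd j k)) * 2 powr (real k * (1 - 1 / p))" .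
  qed (use t in auto)
  also have "\<dots> = (\<Sum>k\<le>N. \<rho> ^ (dd j k) * u k)"
    unfolding rho_pow u_def by (simp add: mult_ac)
  finally show ?thesis .
qed

lemma term_bound: "2 powr (- real j) * S j powr p \<le> W powr (p-1) * (\<Sum>k\<le>N. \<rho> ^ (dd j k) * u k powr p)"
proof -
  have "2 powr (- real j) * S j powr p = (2 powr (- real j / p) * S j) powr p"
    using p S_nonneg[of j] by (simp add: powr_mult powr_powr)
  also have "\<dots> \<le> (\<Sum>k\<le>N. \<rho> ^ (dd j k) * u k) powr p"
    using S_bound[of j] S_nonneg[of j] p by (intro powr_mono2) auto
  also have "\<dots> \<le> (\<Sum>k\<le>N. \<rho> ^ (dd j k)) powr (p-1) * (\<Sum>k\<le>N. \<rho> ^ (dd j k) * u k powr p)"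
    by (rule jensen_powr) (use rho u_nonneg p in auto)
  also have "\<dots> \<le> W powr (p-1) * (\<Sum>k\<le>N. \<rho> ^ (dd j k) * u k powr p)"
  proof (rule mult_right_mono)
    show "(\<Sum>k\<le>N. \<rho> ^ dd j k) powr (p - 1) \<le> W powr (p - 1)"
      unfolding W_def using sum_rho_dd[of \<rho> "{..N}" j] rho p
      by (intro powr_mono2) (auto intro: sum_nonneg)
  qed (use rho in \<open>auto intro: sum_nonneg\<close>)
  finally show ?thesis .
qed

lemma disc_ineq: "(\<Sum>j<J. 2 powr (- real j) * S j powr p) \<le> W powr p * (\<Sum>k\<le>N. u k powr p)"
proof -
  have "(\<Sum>j<J. 2 powr (- real j) * S j powr p) \<le> (\<Sum>j<J. W powr (p-1) * (\<Sum>k\<le>N. \<rho> ^ (dd j k) * u k powr p))"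
    by (intro sum_mono term_bound)
  also have "\<dots> = W powr (p-1) * (\<Sum>k\<le>N. u k powr p * (\<Sum>j<J. \<rho> ^ (dd j k)))"
    by (simp add: sum_distrib_left sum_distrib_right sum.swap[of _ "{..<J}"] mult_ac)
  also have "\<dots> \<le> W powr (p-1) * (\<Sum>k\<le>N. u k powr p * W)"
  proof (rule mult_left_mono, rule sum_mono)
    fix k
    have "(\<Sum>j<J. \<rho> ^ (dd j k)) = (\<Sum>j<J. \<rho> ^ (dd k j))" by (simp add: dd_sym)
    also have "\<dots> \<le> W" unfolding W_def using rho by (intro sum_rho_dd) auto
    finally show "u k powr p * (\<Sum>j<J. \<rho> ^ dd j k) \<le> u k powr p * W" by (intro mult_left_mono) auto
  qed auto
  also have "\<dots> = W powr (p-1) * W * (\<Sum>k\<le>N. u k powr p)"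
    by (simp add: sum_distrib_left sum_distrib_right mult_ac)
  also have "W powr (p-1) * W = W powr p"
  proof -
    have "W powr p = W powr ((p - 1) + 1)" by simp
    also have "\<dots> = W powr (p-1) * W powr 1" by (rule powr_add)
    also have "W powr 1 = W" using W_pos by simp
    finally show ?thesis by simp
  qed
  finally show ?thesis .
qed

end


lemma int_ind_Ioc: "a \<le> b \<Longrightarrow> integral\<^sup>L lborel (\<lambda>x. indicator {a<..b} (x::real) * (c::real)) = (b - a) * c"
  by (simp add: integral_mult_left_zero)
lemma int_ind_Ico: "a \<le> b \<Longrightarrow> integral\<^sup>L lborel (\<lambda>x. indicator {a..<b} (x::real) * (c::real)) = (b - a) * c"
  by (simp add: integral_mult_left_zero)
lemma int_ind_Icc: "a \<le> b \<Longrightarrow> integral\<^sup>L lborel (\<lambda>x. indicator {a..b} (x::real) * (c::real)) = (b - a) * c"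
  by (simp add: integral_mult_left_zero)
lemma fin_sub: "S \<subseteq> {a..b::real} \<Longrightarrow> emeasure lborel S < top"
proof -
  assume "S \<subseteq> {a..b}"
  then have "emeasure lborel S \<le> emeasure lborel {a..b}" by (rule emeasure_mono) simp
  also have "\<dots> < top" by (simp add: emeasure_lborel_Icc_eq)
  finally show ?thesis .
qed
lemma ii_Ioc: "integrable lborel (\<lambda>x. indicator {a<..b} (x::real) * (c::real))"
proof -
  have "{a<..b} \<subseteq> {a..b}" by auto
  from fin_sub[OF this] show ?thesis by (intro integrable_mult_left integrable_real_indicator) auto
qed
lemma ii_Ico: "integrable lborel (\<lambda>x. indicator {a..<b} (x::real) * (c::real))"
proof -
  have "{a..<b} \<subseteq> {a..b}" by auto
  from fin_sub[OF this] show ?thesis by (intro integrable_mult_left integrable_real_indicator) auto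
qed
lemma ii_Icc: "integrable lborel (\<lambda>x. indicator {a..b} (x::real) * (c::real))"
proof -
  have "{a..b} \<subseteq> {a..b}" by auto
  from fin_sub[OF this] show ?thesis by (intro integrable_mult_left integrable_real_indicator) auto
qed

lemma shell_exists:
  fixes x :: real
  assumes "0 < \<bar>x\<bar>" "\<bar>x\<bar> \<le> 4"
  shows "\<bar>x\<bar> \<le> 4 / 2^J \<or> (\<exists>j<J. 4 / 2^(Suc j) < \<bar>x\<bar> \<and> \<bar>x\<bar> \<le> 4 / 2^j)"
proof (induction J)
  case 0 then show ?case using assms by simp
next
  case (Suc J)
  then show ?case
  proof
    assume "\<bar>x\<bar> \<le> 4 / 2^J"
    then show ?thesis by (cases "\<bar>x\<bar> \<le> 4 / 2^(Suc J)") auto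
  next
    assume "\<exists>j<J. 4 / 2^(Suc j) < \<bar>x\<bar> \<and> \<bar>x\<bar> \<le> 4 / 2^j"
    then show ?thesis by (auto intro: less_SucI)
  qed
qed

context discr
begin

definition "HN x = (\<Sum>k\<le>N. t k * min (2^k) (4 / \<bar>x\<bar>))"
definition "B = (\<Sum>k\<le>N. t k * 2^k)"

lemma HN_nonneg: "0 \<le> HN x" unfolding HN_def using t by (intro sum_nonneg) auto
lemma HN_le_B: "HN x \<le> B" unfolding HN_def B_def using t by (intro sum_mono mult_left_mono) auto
lemma HN_0: "HN 0 = 0" unfolding HN_def by simp
lemma HN_meas[measurable]: "HN \<in> borel_measurable borel" unfolding HN_def by measurable

lemma HN_shell:
  assumes "4 / 2^(Suc j) < \<bar>x\<bar>"
  shows "HN x \<le> 2 * S j"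
proof -
  have x0: "0 < \<bar>x\<bar>" using assms by (smt (verit) divide_pos_pos zero_less_power)
  have "4 / \<bar>x\<bar> < 2^(Suc j)" using assms x0 by (simp add: field_simps)
  then have mm: "min (2^k) (4 / \<bar>x\<bar>) \<le> 2 * 2 ^ (min k j)" for k :: nat
  proof (cases "k \<le> j")
    case True
    have h1: "min (2^k) (4/\<bar>x\<bar>) \<le> (2::real)^k" by (rule min.cobounded1)
    have mk: "min k j = k" using True by simp
    have "(0::real) \<le> 2^k" by simp
    then show ?thesis unfolding mk using h1 by linarith
  next
    case False
    then have "min k j = j" by simp
    then show ?thesis using \<open>4 / \<bar>x\<bar> < 2^(Suc j)\<close> by simp
  qed
  have "HN x \<le> (\<Sum>k\<le>N. t k * (2 * 2 ^ (min k j)))"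
    unfolding HN_def using t mm by (intro sum_mono mult_left_mono) auto
  also have "\<dots> = 2 * S j" unfolding S_def by (simp add: sum_distrib_left mult_ac)
  finally show ?thesis .
qed

definition "R J (x::real) = (\<Sum>j<J. indicator {4/2^(Suc j)<..4/2^j} x * (2 * S j) powr p
                 + indicator {-(4/2^j)..<-(4/2^(Suc j))} x * (2 * S j) powr p)
                 + indicator {-(4/2^J)..4/2^J} x * B powr p"

lemma R_nonneg: "0 \<le> R J x" unfolding R_def by (intro add_nonneg_nonneg sum_nonneg) auto

lemma pointwise: "indicator {-pi..pi} x * HN x powr p \<le> R J x"
proof (cases "x \<in> {-pi..pi} \<and> x \<noteq> 0")
  case False
  have "indicator {-pi..pi} x * HN x powr p = 0"
  proof (cases "x \<in> {-pi..pi}")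
    case True
    then have "x = 0" using False by simp
    then show ?thesis using HN_0 by simp
  qed simp
  then show ?thesis using R_nonneg[of J x] by linarith
next
  case True
  have x: "0 < \<bar>x\<bar>" "\<bar>x\<bar> \<le> 4" using True pi_less_4 by auto
  have T: "(\<Sum>j<J. indicator {4/2^(Suc j)<..4/2^j} x * (2 * S j) powr p
                 + indicator {-(4/2^j)..<-(4/2^(Suc j))} x * (2 * S j) powr p) \<ge> 0"
    by (intro sum_nonneg) auto
  have lhs: "indicator {-pi..pi} x * HN x powr p = HN x powr p" using True by simp
  from shell_exists[OF x, of J] show ?thesis
  proof
    assume c: "\<bar>x\<bar> \<le> 4 / 2^J"
    have "HN x powr p \<le> B powr p" using HN_le_B HN_nonneg p by (intro powr_mono2) auto
    also have "\<dots> = indicator {-(4/2^J)..4/2^J} x * B powr p" using c by (auto simp: indicator_def abs_le_iff)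
    also have "\<dots> \<le> R J x" unfolding R_def using T by simp
    finally have "HN x powr p \<le> R J x" .
    then show ?thesis using lhs by linarith
  next
    assume "\<exists>j<J. 4 / 2^(Suc j) < \<bar>x\<bar> \<and> \<bar>x\<bar> \<le> 4 / 2^j"
    then obtain j where j: "j < J" "4 / 2^(Suc j) < \<bar>x\<bar>" "\<bar>x\<bar> \<le> 4 / 2^j" by blast
    have "HN x powr p \<le> (2 * S j) powr p" using HN_shell[OF j(2)] HN_nonneg p by (intro powr_mono2) auto
    also have "\<dots> = indicator {4/2^(Suc j)<..4/2^j} x * (2 * S j) powr p
                 + indicator {-(4/2^j)..<-(4/2^(Suc j))} x * (2 * S j) powr p"
      using j(2,3) by (cases "0 \<le> x") (auto simp: indicator_def)
    also have "\<dots> \<le> (\<Sum>j<J. indicator {4/2^(Suc j)<..4/2^j} x * (2 * S j) powr p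
                 + indicator {-(4/2^j)..<-(4/2^(Suc j))} x * (2 * S j) powr p)"
      by (rule member_le_sum[where i=j]) (use j(1) in auto)
    also have "\<dots> \<le> R J x" unfolding R_def by simp
    finally have "HN x powr p \<le> R J x" .
    then show ?thesis using lhs by linarith
  qed
qed

lemma R_integrable: "integrable lborel (R J)"
  unfolding R_def
  by (intro Bochner_Integration.integrable_add Bochner_Integration.integrable_sum ii_Ioc ii_Ico ii_Icc)

lemma R_integral: "integral\<^sup>L lborel (R J) = (\<Sum>j<J. (4 / 2^j) * (2 * S j) powr p) + (8 / 2^J) * B powr p"
proof -
  define c where "c j = (2 * S j) powr p" for j
  define a where "a j = (4::real) / 2^(Suc j)" for j
  define b where "b j = (4::real) / 2^j" for j
  have ab: "a j \<le> b j" for j unfolding a_def b_def by (simp add: field_simps)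
  have R: "R J = (\<lambda>x. (\<Sum>j<J. indicator {a j<..b j} x * c j + indicator {- b j..<- a j} x * c j)
                 + indicator {- b J..b J} x * B powr p)"
    unfolding R_def a_def b_def c_def by (rule ext) simp
  have i1: "integrable lborel (\<lambda>x. indicator {a j<..b j} x * c j + indicator {- b j..<- a j} (x::real) * c j)" for j
    by (intro Bochner_Integration.integrable_add ii_Ioc ii_Ico)
  have a1: "integrable lborel (\<lambda>x. (\<Sum>j<J. indicator {a j<..b j} x * c j + indicator {- b j..<- a j} (x::real) * c j))"
    by (intro Bochner_Integration.integrable_sum i1)
  have "integral\<^sup>L lborel (R J) = integral\<^sup>L lborel (\<lambda>x. (\<Sum>j<J. indicator {a j<..b j} x * c j + indicator {- b j..<- a j} (x::real) * c j))
       + integral\<^sup>L lborel (\<lambda>x. indicator {- b J..b J} (x::real) * B powr p)"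
    unfolding R by (rule Bochner_Integration.integral_add[OF a1 ii_Icc])
  also have "integral\<^sup>L lborel (\<lambda>x. (\<Sum>j<J. indicator {a j<..b j} x * c j + indicator {- b j..<- a j} (x::real) * c j))
      = (\<Sum>j<J. integral\<^sup>L lborel (\<lambda>x. indicator {a j<..b j} x * c j + indicator {- b j..<- a j} (x::real) * c j))"
    by (rule Bochner_Integration.integral_sum) (rule i1)
  also have "\<dots> = (\<Sum>j<J. (4 / 2^j) * c j)"
  proof (rule sum.cong[OF refl])
    fix j
    have "integral\<^sup>L lborel (\<lambda>x. indicator {a j<..b j} x * c j + indicator {- b j..<- a j} (x::real) * c j)
        = integral\<^sup>L lborel (\<lambda>x. indicator {a j<..b j} (x::real) * c j) + integral\<^sup>L lborel (\<lambda>x. indicator {- b j..<- a j} (x::real) * c j)"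
      by (rule Bochner_Integration.integral_add[OF ii_Ioc ii_Ico])
    also have "\<dots> = (b j - a j) * c j + (b j - a j) * c j"
      using ab[of j] by (simp add: int_ind_Ioc int_ind_Ico)
    also have "\<dots> = (4 / 2^j) * c j" unfolding a_def b_def by (simp add: field_simps)
    finally show "integral\<^sup>L lborel (\<lambda>x. indicator {a j<..b j} x * c j + indicator {- b j..<- a j} (x::real) * c j) = (4 / 2^j) * c j" .
  qed
  also have "integral\<^sup>L lborel (\<lambda>x. indicator {- b J..b J} (x::real) * B powr p) = (8 / 2^J) * B powr p"
    by (subst int_ind_Icc) (auto simp: b_def field_simps)
  finally show ?thesis unfolding c_def .
qed

definition "C0 = 4 * 2 powr p * W powr p"

lemma HN_int_bound_J:
  "integral\<^sup>L lborel (\<lambda>x. indicator {-pi..pi} x * HN x powr p) \<le> C0 * (\<Sum>k\<le>N. u k powr p) + (8 / 2^J) * B powr p"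
proof -
  have "integral\<^sup>L lborel (\<lambda>x. indicator {-pi..pi} x * HN x powr p) \<le> integral\<^sup>L lborel (R J)"
    by (rule integral_mono') (use R_integrable pointwise R_nonneg in auto)
  also have "\<dots> = (\<Sum>j<J. (4 / 2^j) * (2 * S j) powr p) + (8 / 2^J) * B powr p" by (rule R_integral)
  also have "(\<Sum>j<J. (4 / 2^j) * (2 * S j) powr p) = 4 * 2 powr p * (\<Sum>j<J. 2 powr (- real j) * S j powr p)"
    using S_nonneg by (simp add: sum_distrib_left powr_mult powr_minus powr_realpow divide_inverse mult_ac)
  also have "\<dots> \<le> 4 * 2 powr p * (W powr p * (\<Sum>k\<le>N. u k powr p))"
    by (intro mult_left_mono disc_ineq) auto
  finally show ?thesis unfolding C0_def by (simp add: mult_ac)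
qed

lemma HN_int_bound:
  "integral\<^sup>L lborel (\<lambda>x. indicator {-pi..pi} x * HN x powr p) \<le> C0 * (\<Sum>k\<le>N. u k powr p)"
proof (rule field_le_epsilon)
  fix e :: real assume e: "0 < e"
  obtain J :: nat where J: "8 * B powr p / e < 2^J"
    using real_arch_pow[of 2 "8 * B powr p / e"] by auto
  then have "(8 / 2^J) * B powr p < e" using e by (simp add: field_simps)
  then show "integral\<^sup>L lborel (\<lambda>x. indicator {-pi..pi} x * HN x powr p) \<le> C0 * (\<Sum>k\<le>N. u k powr p) + e"
    using HN_int_bound_J[of J] by linarith
qed

lemma HN_integrable: "integrable lborel (\<lambda>x. indicator {-pi..pi} x * HN x powr p)"
proof (rule Bochner_Integration.integrable_bound[OF R_integrable[of 0]])
  show "(\<lambda>x. indicator {-pi..pi} x * HN x powr p) \<in> borel_measurable lborel" by measurable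
  show "AE x in lborel. norm (indicator {-pi..pi} x * HN x powr p) \<le> norm (R 0 x)"
    using pointwise[of _ 0] R_nonneg[of 0] by (auto simp: indicator_def)
qed

end


lemma conj_exp_eq: "1 < p \<Longrightarrow> real k / conj_exp p = real k * (1 - 1/p)"
  unfolding conj_exp_def by (simp add: field_simps)

locale mctx =
  fixes p :: real and f :: "real \<Rightarrow> complex"
  assumes p: "1 < p" and fi: "set_integrable lborel {-pi..pi} f" and sm: "summable (Ip_term p f)"
begin

abbreviation "t \<equiv> Theta f"

lemma dI: "discr p t"
  by unfold_locales (use p Theta_nonneg in auto)

lemma u_eq: "discr.u p t k powr p = Ip_term p f k"
  unfolding discr.u_def[OF dI] Ip_term_def conj_exp_eq[OF p] ..

lemma Ip_nonneg: "0 \<le> Ip_term p f k" unfolding Ip_term_def by simp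

definition "SI = (\<Sum>k. Ip_term p f k)"

lemma partial_le: "(\<Sum>k\<le>N. discr.u p t k powr p) \<le> SI"
  unfolding u_eq SI_def by (rule sum_le_suminf[OF sm]) (auto simp: Ip_nonneg)

lemma t_summable: "summable t"
proof -
  have "(\<lambda>k. Ip_term p f k) \<longlonglongrightarrow> 0" using sm by (rule summable_LIMSEQ_zero)
  then have "bounded (range (Ip_term p f))" by (rule convergent_imp_bounded)
  then obtain M where M0: "\<forall>y\<in>range (Ip_term p f). norm y \<le> M"
    unfolding bounded_iff by blast
  have M: "Ip_term p f k \<le> M" for k
    using M0 by (metis abs_ge_self order_trans rangeI real_norm_def)
  define q where "q = 1 - 1/p"
  have q: "0 < q" unfolding q_def using p by simp
  define M' where "M' = M powr (1/p)"
  have uk: "discr.u p t k \<le> M'" for k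
  proof -
    have u0: "0 \<le> discr.u p t k" by (rule discr.u_nonneg[OF dI])
    have "discr.u p t k = (discr.u p t k powr p) powr (1/p)"
      using u0 p by (simp add: powr_powr)
    also have "\<dots> \<le> M powr (1/p)" using M[of k] u_eq[of k] u0 p Ip_nonneg[of k] by (intro powr_mono2) auto
    finally show ?thesis unfolding M'_def .
  qed
  have tk: "t k \<le> M' * (2 powr (- q)) ^ k" for k
  proof -
    have "t k = 2 powr (- (real k * q)) * discr.u p t k"
    proof -
      have "2 powr (- (real k * q)) * discr.u p t k = (2 powr (- (real k * q)) * 2 powr (real k * q)) * t k"
        unfolding discr.u_def[OF dI] q_def by (simp add: mult_ac)
      also have "2 powr (- (real k * q)) * 2 powr (real k * q) = 1" by (simp add: powr_add[symmetric])
      finally show ?thesis by simp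
    qed
    also have "\<dots> \<le> 2 powr (- (real k * q)) * M'" using uk by (intro mult_left_mono) auto
    also have "2 powr (- (real k * q)) = (2 powr (- q)) ^ k" by (simp add: powr_power mult_ac)
    finally show ?thesis by (simp add: mult_ac)
  qed
  have "summable (\<lambda>k. M' * (2 powr (- q)) ^ k)"
    using q by (intro summable_mult summable_geometric) (auto intro: powr_less_one)
  then show ?thesis
    by (rule summable_comparison_test') (use tk Theta_nonneg in auto)
qed

definition "H x = (\<Sum>k. t k * min (2^k) (4 / \<bar>x\<bar>))"

lemma H_term_le: "t k * min (2^k) (4 / \<bar>x\<bar>) \<le> t k * (4 / \<bar>x\<bar>)"
  using Theta_nonneg[of f k] by (intro mult_left_mono) auto

lemma H_summable: "summable (\<lambda>k. t k * min (2^k) (4 / \<bar>x\<bar>))"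
proof (rule summable_comparison_test')
  show "summable (\<lambda>k. t k * (4 / \<bar>x\<bar>))" by (intro summable_mult2 t_summable)
  fix k show "norm (t k * min (2^k) (4 / \<bar>x\<bar>)) \<le> t k * (4 / \<bar>x\<bar>)"
    using H_term_le[of k x] Theta_nonneg[of f k] by (simp add: abs_mult)
qed

lemma HN_lim: "(\<lambda>N. discr.HN t N x) \<longlonglongrightarrow> H x"
  unfolding discr.HN_def[OF dI] H_def using summable_LIMSEQ'[OF H_summable] .

lemma HN_mono: "N \<le> M \<Longrightarrow> discr.HN t N x \<le> discr.HN t M x"
  unfolding discr.HN_def[OF dI]
  by (rule sum_mono2) (use Theta_nonneg in auto)

lemma HN_le_H: "discr.HN t N x \<le> H x"
  unfolding discr.HN_def[OF dI] H_def
  by (rule sum_le_suminf[OF H_summable]) (use Theta_nonneg in auto)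

lemma H_nonneg: "0 \<le> H x" using HN_le_H[of 0 x] discr.HN_nonneg[OF dI, of 0 x] by linarith

lemma H_meas[measurable]: "H \<in> borel_measurable borel"
  by (rule borel_measurable_LIMSEQ_metric[OF _ HN_lim]) (rule discr.HN_meas[OF dI])

definition "C0 = discr.C0 p"

lemma Hp_lim: "(\<lambda>N. indicator {-pi..pi} x * discr.HN t N x powr p) \<longlonglongrightarrow> indicator {-pi..pi} x * H x powr p"
proof (cases "H x = 0")
  case True
  then have "discr.HN t N x = 0" for N using HN_le_H[of N x] discr.HN_nonneg[OF dI, of N x] by linarith
  then show ?thesis using True by simp
next
  case False
  have "(\<lambda>N. discr.HN t N x powr p) \<longlonglongrightarrow> H x powr p"
    by (rule tendsto_powr[OF HN_lim tendsto_const False])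
  then show ?thesis by (intro tendsto_mult tendsto_const)
qed

lemma Hp_integrable: "integrable lborel (\<lambda>x. indicator {-pi..pi} x * H x powr p)"
  and Hp_integral: "integral\<^sup>L lborel (\<lambda>x. indicator {-pi..pi} x * H x powr p) \<le> C0 * SI"
proof -
  let ?F = "\<lambda>N x. indicator {-pi..pi} x * discr.HN t N x powr p"
  have iF: "integrable lborel (?F N)" for N by (rule discr.HN_integrable[OF dI])
  have monoF: "?F N x \<le> ?F M x" if "N \<le> M" for N M x
    using HN_mono[OF that, of x] discr.HN_nonneg[OF dI, of N x] p
    by (auto intro!: mult_left_mono powr_mono2 simp: indicator_def)
  have bd: "integral\<^sup>L lborel (?F N) \<le> C0 * SI" for N
  proof -
    have "integral\<^sup>L lborel (?F N) \<le> discr.C0 p * (\<Sum>k\<le>N. discr.u p t k powr p)"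
      by (rule discr.HN_int_bound[OF dI])
    also have "\<dots> \<le> discr.C0 p * SI"
      by (intro mult_left_mono partial_le) (auto simp: discr.C0_def[OF dI])
    finally show ?thesis unfolding C0_def .
  qed
  have inc: "incseq (\<lambda>N. integral\<^sup>L lborel (?F N))"
    by (intro incseq_SucI integral_mono iF) (auto intro: monoF)
  obtain L where L: "(\<lambda>N. integral\<^sup>L lborel (?F N)) \<longlonglongrightarrow> L"
    using incseq_convergent[OF inc, of "C0 * SI"] bd by blast
  have LB: "L \<le> C0 * SI" using L bd by (intro LIMSEQ_le_const2) auto
  have mono: "AE x in lborel. mono (\<lambda>n. ?F n x)"
    by (rule AE_I2) (auto intro: monoI monoF)
  have lim: "AE x in lborel. (\<lambda>i. ?F i x) \<longlonglongrightarrow> indicator {-pi..pi} x * H x powr p"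
    by (rule AE_I2) (rule Hp_lim)
  have meas: "(\<lambda>x. indicator {-pi..pi} x * H x powr p) \<in> borel_measurable lborel" by measurable
  have mc: "integrable lborel (\<lambda>x. indicator {-pi..pi} x * H x powr p) \<and>
            integral\<^sup>L lborel (\<lambda>x. indicator {-pi..pi} x * H x powr p) = L"
    using integrable_monotone_convergence[OF iF mono lim L meas]
          integral_monotone_convergence[OF iF mono lim L meas] by blast
  then show "integrable lborel (\<lambda>x. indicator {-pi..pi} x * H x powr p)" by simp
  show "integral\<^sup>L lborel (\<lambda>x. indicator {-pi..pi} x * H x powr p) \<le> C0 * SI" using mc LB by simp
qed

lemma H_le: "H x \<le> 1 + H x powr p"
proof (cases "H x \<le> 1")
  case True then show ?thesis using powr_ge_zero[of "H x" p] by linarith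
next
  case False
  then have "H x = H x powr 1" by simp
  also have "\<dots> \<le> H x powr p" using False p by (intro powr_mono) auto
  finally show ?thesis by simp
qed

lemma H_integrable: "integrable lborel (\<lambda>x. indicator {-pi..pi} x * H x)"
proof (rule Bochner_Integration.integrable_bound)
  show "integrable lborel (\<lambda>x. indicator {-pi..pi} x * 1 + indicator {-pi..pi} x * H x powr p)"
    by (intro Bochner_Integration.integrable_add Hp_integrable ii_Icc)
  show "(\<lambda>x. indicator {-pi..pi} x * H x) \<in> borel_measurable lborel" by measurable
  show "AE x in lborel. norm (indicator {-pi..pi} x * H x) \<le> norm (indicator {-pi..pi} x * 1 + indicator {-pi..pi} x * H x powr p)"
    using H_le H_nonneg by (auto simp: indicator_def)
qed

end


context mctx
begin

definition "S0 = {-pi..pi} - {0::real}"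

lemma S0_sets[measurable]: "S0 \<in> sets borel" unfolding S0_def by simp

lemma bt_norm: "x \<in> S0 \<Longrightarrow> norm (bt f k x) \<le> t k * min (2^k) (4 / \<bar>x\<bar>)"
  unfolding S0_def by (intro bt_bound) auto

lemma Gterm_bound: "norm (indicator S0 x *\<^sub>R bt f k x) \<le> t k * min (2^k) (4 / \<bar>x\<bar>)"
proof (cases "x \<in> S0")
  case True then show ?thesis using bt_norm by simp
next
  case False then show ?thesis using Theta_nonneg[of f k] by simp
qed

lemma Gnorm_summable: "summable (\<lambda>k. norm (indicator S0 x *\<^sub>R bt f k x))"
  by (rule summable_comparison_test'[OF H_summable]) (use Gterm_bound in simp)

lemma G_summable: "summable (\<lambda>k. indicator S0 x *\<^sub>R bt f k x)"
  using Gnorm_summable by (rule summable_norm_cancel)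

definition "G x = (\<Sum>k. indicator S0 x *\<^sub>R bt f k x)"

lemma G_lim: "(\<lambda>N. indicator S0 x *\<^sub>R gN f N x) \<longlonglongrightarrow> G x"
  unfolding gN_def G_def scaleR_sum_right using summable_LIMSEQ'[OF G_summable] .

lemma G_meas[measurable]: "G \<in> borel_measurable borel"
proof (rule borel_measurable_LIMSEQ_metric[OF _ G_lim])
  fix N
  have "gN f N \<in> borel_measurable borel" by (intro borel_measurable_continuous_onI gN_cont)
  then show "(\<lambda>x. indicator S0 x *\<^sub>R gN f N x) \<in> borel_measurable borel" by measurable
qed

lemma G_bound: "norm (G x) \<le> H x"
proof -
  have "norm (G x) \<le> (\<Sum>k. norm (indicator S0 x *\<^sub>R bt f k x))"
    unfolding G_def by (rule summable_norm[OF Gnorm_summable])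
  also have "\<dots> \<le> H x" unfolding H_def
    by (rule suminf_le[OF Gterm_bound Gnorm_summable H_summable])
  finally show ?thesis .
qed

lemma gN_bound: "x \<in> S0 \<Longrightarrow> norm (gN f N x) \<le> H x"
proof -
  assume x: "x \<in> S0"
  have "norm (gN f N x) \<le> (\<Sum>k\<le>N. norm (bt f k x))" unfolding gN_def by (rule norm_sum)
  also have "\<dots> \<le> (\<Sum>k\<le>N. t k * min (2^k) (4 / \<bar>x\<bar>))" by (intro sum_mono bt_norm x)
  also have "\<dots> = discr.HN t N x" unfolding discr.HN_def[OF dI] ..
  also have "\<dots> \<le> H x" by (rule HN_le_H)
  finally show ?thesis .
qed

lemma G_si: "set_integrable lborel {-pi..pi} G"
  unfolding set_integrable_def
proof (rule Bochner_Integration.integrable_bound[OF H_integrable])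
  show "(\<lambda>x. indicator {-pi..pi} x *\<^sub>R G x) \<in> borel_measurable lborel" by measurable
  show "AE x in lborel. norm (indicator {-pi..pi} x *\<^sub>R G x) \<le> norm (indicator {-pi..pi} x * H x)"
    using G_bound H_nonneg by (auto simp: indicator_def)
qed

definition "cg j = (LINT x:{-pi..pi}|lborel. G x * E (-j) x)"

lemma coeff_lim: "(\<lambda>N. LINT x:{-pi..pi}|lborel. gN f N x * E (-j) x) \<longlonglongrightarrow> cg j"
proof -
  have lim: "(\<lambda>N. integral\<^sup>L lborel (\<lambda>x. indicator {-pi..pi} x *\<^sub>R (gN f N x * E (-j) x)))
      \<longlonglongrightarrow> integral\<^sup>L lborel (\<lambda>x. indicator {-pi..pi} x *\<^sub>R (G x * E (-j) x))"
  proof (rule integral_dominated_convergence[where w="\<lambda>x. indicator {-pi..pi} x * H x"])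
    show "(\<lambda>x. indicator {-pi..pi} x *\<^sub>R (G x * E (-j) x)) \<in> borel_measurable lborel" by measurable
    fix N
    have "gN f N \<in> borel_measurable borel" by (intro borel_measurable_continuous_onI gN_cont)
    then show "(\<lambda>x. indicator {-pi..pi} x *\<^sub>R (gN f N x * E (-j) x)) \<in> borel_measurable lborel" by measurable
  next
    show "integrable lborel (\<lambda>x. indicator {-pi..pi} x * H x)" by (rule H_integrable)
  next
    show "AE x in lborel. (\<lambda>N. indicator {-pi..pi} x *\<^sub>R (gN f N x * E (-j) x))
          \<longlonglongrightarrow> indicator {-pi..pi} x *\<^sub>R (G x * E (-j) x)"
      using AE_lborel_singleton[of 0]
    proof eventually_elim
      case (elim x)
      show ?case
      proof (cases "x \<in> {-pi..pi}")
        case True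
        then have xS: "x \<in> S0" using elim unfolding S0_def by simp
        have "(\<lambda>N. gN f N x) \<longlonglongrightarrow> G x" using G_lim[of x] xS by simp
        then have "(\<lambda>N. gN f N x * E (-j) x) \<longlonglongrightarrow> G x * E (-j) x"
          by (intro tendsto_mult tendsto_const)
        then show ?thesis using True by simp
      qed simp
    qed
  next
    fix N
    show "AE x in lborel. norm (indicator {-pi..pi} x *\<^sub>R (gN f N x * E (-j) x)) \<le> indicator {-pi..pi} x * H x"
      using AE_lborel_singleton[of 0]
    proof eventually_elim
      case (elim x)
      show ?case
      proof (cases "x \<in> {-pi..pi}")
        case True
        then have xS: "x \<in> S0" using elim unfolding S0_def by simp
        then show ?thesis using True gN_bound[OF xS, of N] by (simp add: norm_mult)
      qed simp
    qed
  qed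
  then show ?thesis unfolding cg_def set_lebesgue_integral_def .
qed

abbreviation "a \<equiv> fourier_coeff f"

lemma ev_pos: "0 \<le> (j::int) \<Longrightarrow> eventually (\<lambda>N. j < 2^N) sequentially"
proof -
  assume j: "0 \<le> j"
  show ?thesis unfolding eventually_sequentially
  proof (intro exI allI impI)
    fix N assume N: "nat j \<le> N"
    have "j = int (nat j)" using j by simp
    also have "int (nat j) < 2 ^ nat j" by (metis less_exp of_nat_less_iff of_nat_numeral of_nat_power)
    also have "(2::int) ^ nat j \<le> 2 ^ N" using N by (intro power_increasing) auto
    finally show "j < 2^N" .
  qed
qed

lemma seq_pos: "0 \<le> j \<Longrightarrow> (\<lambda>N. a (2^N)) \<longlonglongrightarrow> a j - cg j / (2 * pi)"
proof -
  assume j: "0 \<le> j"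
  have ev: "eventually (\<lambda>N. (LINT x:{-pi..pi}|lborel. gN f N x * E (-j) x) = 2 * pi * (a j - a (2^N))) sequentially"
    using ev_pos[OF j] by eventually_elim (simp add: int_gN_E coeff_gN_pos j)
  have "(\<lambda>N. 2 * pi * (a j - a (2^N))) \<longlonglongrightarrow> cg j"
    using coeff_lim[of j] ev by (rule Lim_transform_eventually)
  then have "(\<lambda>N. a j - (2 * pi * (a j - a (2^N))) / (2 * pi)) \<longlonglongrightarrow> a j - cg j / (2 * pi)"
    by (intro tendsto_intros) auto
  then show ?thesis by simp
qed

lemma seq_neg: "j < 0 \<Longrightarrow> (\<lambda>N. a (- (2^N))) \<longlonglongrightarrow> a j - cg j / (2 * pi)"
proof -
  assume j: "j < 0"
  have ev: "eventually (\<lambda>N. (LINT x:{-pi..pi}|lborel. gN f N x * E (-j) x) = 2 * pi * (a j - a (- (2^N)))) sequentially"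
  proof -
    have e0: "eventually (\<lambda>N. -j < 2^N) sequentially" using j by (intro ev_pos) simp
    then show ?thesis by eventually_elim (simp add: int_gN_E coeff_gN_neg j)
  qed
  have "(\<lambda>N. 2 * pi * (a j - a (- (2^N)))) \<longlonglongrightarrow> cg j"
    using coeff_lim[of j] ev by (rule Lim_transform_eventually)
  then have "(\<lambda>N. a j - (2 * pi * (a j - a (- (2^N)))) / (2 * pi)) \<longlonglongrightarrow> a j - cg j / (2 * pi)"
    by (intro tendsto_intros) auto
  then show ?thesis by simp
qed

definition "Lp = a 0 - cg 0 / (2 * pi)"
definition "Lm = a (-1) - cg (-1) / (2 * pi)"

lemma L_pos: "0 \<le> j \<Longrightarrow> a j - cg j / (2 * pi) = Lp"
  unfolding Lp_def using seq_pos[of j] seq_pos[of 0] by (metis LIMSEQ_unique order_refl)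

lemma L_neg: "j < 0 \<Longrightarrow> a j - cg j / (2 * pi) = Lm"
  unfolding Lm_def using seq_neg[of j] seq_neg[of "-1"] by (metis LIMSEQ_unique neg_less_0_iff_less zero_less_one)

end


lemma nonint:
  fixes h :: "real \<Rightarrow> complex"
  assumes h: "set_integrable lborel {-pi..pi} h"
    and ae: "AE x in lborel. x \<in> {-pi..pi} \<longrightarrow> h x * (1 - E 1 x) = D"
  shows "D = 0"
proof (rule ccontr)
  assume D: "D \<noteq> 0"
  define A where "A = (LINT x:{-pi..pi}|lborel. norm (h x))"
  define d where "d = norm D"
  have d: "0 < d" unfolding d_def using D by simp
  have hn: "set_integrable lborel {-pi..pi} (\<lambda>x. norm (h x))" using h by (rule set_integrable_norm)
  have A0: "0 \<le> A" unfolding A_def set_lebesgue_integral_def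
    by (rule Bochner_Integration.integral_nonneg) auto
  define e where "e = pi * exp (- (A / d + 1))"
  have "0 \<le> A / d" using A0 d by simp
  then have ex: "exp (- (A / d + 1)) < 1" by simp
  have e: "0 < e" "e < pi" unfolding e_def using ex by auto
  have hsub: "set_integrable lborel {e..pi} (\<lambda>x. norm (h x))"
    by (rule set_integrable_subset[OF hn]) (use e in auto)
  have int1: "set_integrable lborel {e..pi} (\<lambda>x. d / x)"
    by (rule borel_integrable_atLeastAtMost') (use e in \<open>auto intro!: continuous_intros\<close>)
  have "(LINT x:{e..pi}|lborel. d / x) \<le> (LINT x:{e..pi}|lborel. norm (h x))"
  proof (rule set_integral_mono_AE[OF int1 hsub])
    show "AE x\<in>{e..pi} in lborel. d / x \<le> norm (h x)"
      using ae
    proof eventually_elim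
      case (elim x)
      show ?case
      proof
        assume x: "x \<in> {e..pi}"
        then have x0: "0 < x" using e by auto
        have "h x * (1 - E 1 x) = D" using elim x e by auto
        then have "h x * (1 - cis x) = D" by (simp add: E_cis)
        then have "norm (h x * (1 - cis x)) = d" unfolding d_def by simp
        then have "d = norm (h x) * norm (1 - cis x)" by (simp add: norm_mult)
        also have "\<dots> \<le> norm (h x) * x"
          using norm_1_cis_upper[of x] x0 by (intro mult_left_mono) auto
        finally show "d / x \<le> norm (h x)" using x0 by (simp add: divide_le_eq mult.commute)
      qed
    qed
  qed
  also have "\<dots> \<le> A"
  proof -
    have "(LINT x:{e..pi}|lborel. norm (h x)) = integral\<^sup>L lborel (\<lambda>x. indicator {e..pi} x * norm (h x))"
      unfolding set_lebesgue_integral_def by simp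
    also have "\<dots> \<le> integral\<^sup>L lborel (\<lambda>x. indicator {-pi..pi} x * norm (h x))"
    proof (rule integral_mono)
      show "integrable lborel (\<lambda>x. indicator {e..pi} x * norm (h x))"
        using hsub unfolding set_integrable_def by simp
      show "integrable lborel (\<lambda>x. indicator {-pi..pi} x * norm (h x))"
        using hn unfolding set_integrable_def by simp
      fix x show "indicator {e..pi} x * norm (h x) \<le> indicator {-pi..pi} x * norm (h x)"
        using e by (auto simp: indicator_def)
    qed
    also have "\<dots> = A" unfolding A_def set_lebesgue_integral_def by simp
    finally show ?thesis .
  qed
  finally have le: "(LINT x:{e..pi}|lborel. d / x) \<le> A" .
  have "(LINT x:{e..pi}|lborel. d / x) = (LBINT x=e..pi. d / x)"
    using e by (simp add: interval_integral_Icc)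
  also have "\<dots> = d * ln pi - d * ln e"
  proof (rule interval_integral_FTC_finite)
    show "continuous_on {min e pi..max e pi} (\<lambda>x. d / x)" using e by (auto intro!: continuous_intros)
    fix x assume x: "min e pi \<le> x" "x \<le> max e pi"
    then have x0: "0 < x" using e by auto
    have "((\<lambda>x. d * ln x) has_real_derivative d * (1 / x)) (at x within {min e pi..max e pi})"
      using x0 by (auto intro!: derivative_eq_intros)
    then show "((\<lambda>x. d * ln x) has_vector_derivative d / x) (at x within {min e pi..max e pi})"
      by (simp add: has_real_derivative_iff_has_vector_derivative)
  qed
  also have "ln e = ln pi - (A / d + 1)" unfolding e_def by (simp add: ln_mult)
  finally have "d * ln pi - d * (ln pi - (A / d + 1)) \<le> A" using le by simp
  moreover have "d * ln pi - d * (ln pi - (A / d + 1)) = d * (A / d) + d" by (simp add: algebra_simps)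
  moreover have "d * (A / d) = A" using d by simp
  ultimately show False using d by linarith
qed

context mctx
begin

definition "h x = f x - G x"

lemma h_si: "set_integrable lborel {-pi..pi} h"
  unfolding h_def using fi G_si by (rule set_integral_diff(1))

lemma fE_si: "set_integrable lborel {-pi..pi} (\<lambda>x. f x * E k x)"
  by (rule si_bmult[OF fi E_meas, where B=1]) simp
lemma GE_si: "set_integrable lborel {-pi..pi} (\<lambda>x. G x * E k x)"
  by (rule si_bmult[OF G_si E_meas, where B=1]) simp
lemma hE_si: "set_integrable lborel {-pi..pi} (\<lambda>x. h x * E k x)"
  by (rule si_bmult[OF h_si E_meas, where B=1]) simp

lemma f_coeff: "(LINT x:{-pi..pi}|lborel. f x * E (-j) x) = 2 * pi * a j"
proof -
  have "a j = complex_of_real (1 / (2 * pi)) * (LINT x:{-pi..pi}|lborel. f x * E (-j) x)"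
    unfolding fourier_coeff_def E_neg_coeff ..
  then show ?thesis by (simp add: field_simps)
qed

lemma alg: fixes c :: complex assumes "c \<noteq> 0" shows "c * x - y = c * (x - y / c)"
  using assms by (simp add: field_simps)

lemma h_coeff: "(LINT x:{-pi..pi}|lborel. h x * E (-j) x) = 2 * pi * (a j - cg j / (2 * pi))"
proof -
  have "(LINT x:{-pi..pi}|lborel. h x * E (-j) x) = (LINT x:{-pi..pi}|lborel. f x * E (-j) x - G x * E (-j) x)"
    unfolding h_def by (simp add: algebra_simps)
  also have "\<dots> = (LINT x:{-pi..pi}|lborel. f x * E (-j) x) - (LINT x:{-pi..pi}|lborel. G x * E (-j) x)"
    by (rule set_integral_diff(2)[OF fE_si GE_si])
  also have "\<dots> = 2 * pi * a j - cg j" unfolding f_coeff cg_def ..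
  also have "\<dots> = 2 * pi * (a j - cg j / (2 * pi))" by (rule alg) simp
  finally show ?thesis .
qed

lemma ch_pos: "0 \<le> j \<Longrightarrow> (LINT x:{-pi..pi}|lborel. h x * E (-j) x) = 2 * pi * Lp"
  using h_coeff L_pos by simp
lemma ch_neg: "j < 0 \<Longrightarrow> (LINT x:{-pi..pi}|lborel. h x * E (-j) x) = 2 * pi * Lm"
  using h_coeff L_neg by simp

definition "Dc = Lp - Lm"
definition "uu x = h x * (1 - E 1 x) - Dc"

lemma const_si: "set_integrable lborel {-pi..pi} (\<lambda>x. c * E k x)"
  by (rule borel_integrable_atLeastAtMost') (intro continuous_intros)

lemma uu_orth: "(LINT x:{-pi..pi}|lborel. uu x * E k x) = 0"
proof -
  have eq: "uu x * E k x = (h x * E (-(-k)) x - h x * E (-(-k-1)) x) - Dc * E k x" for x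
    unfolding uu_def by (simp add: algebra_simps E_mult[symmetric])
  have "(LINT x:{-pi..pi}|lborel. uu x * E k x)
      = (LINT x:{-pi..pi}|lborel. (h x * E (-(-k)) x - h x * E (-(-k-1)) x) - Dc * E k x)"
    unfolding eq ..
  also have "\<dots> = (LINT x:{-pi..pi}|lborel. h x * E (-(-k)) x - h x * E (-(-k-1)) x) - (LINT x:{-pi..pi}|lborel. Dc * E k x)"
    by (rule set_integral_diff(2)) (intro set_integral_diff(1) hE_si const_si)+
  also have "(LINT x:{-pi..pi}|lborel. h x * E (-(-k)) x - h x * E (-(-k-1)) x)
      = (LINT x:{-pi..pi}|lborel. h x * E (-(-k)) x) - (LINT x:{-pi..pi}|lborel. h x * E (-(-k-1)) x)"
    by (rule set_integral_diff(2)[OF hE_si hE_si])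
  also have "(LINT x:{-pi..pi}|lborel. Dc * E k x) = Dc * (if k = 0 then 2 * pi else 0)"
    by (simp add: int_E)
  finally have I: "(LINT x:{-pi..pi}|lborel. uu x * E k x) =
      (LINT x:{-pi..pi}|lborel. h x * E (-(-k)) x) - (LINT x:{-pi..pi}|lborel. h x * E (-(-k-1)) x)
      - Dc * (if k = 0 then 2 * pi else 0)" .
  consider "k = 0" | "0 < k" | "k < 0" by linarith
  then show ?thesis
  proof cases
    case 1 then show ?thesis unfolding I using ch_pos[of 0] ch_neg[of "-1"] by (simp add: Dc_def algebra_simps)
  next
    case 2 then show ?thesis unfolding I using ch_neg[of "-k"] ch_neg[of "-k-1"] by simp
  next
    case 3 then show ?thesis unfolding I using ch_pos[of "-k"] ch_pos[of "-k-1"] by simp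
  qed
qed

lemma uu_si: "set_integrable lborel {-pi..pi} uu"
proof -
  have "set_integrable lborel {-pi..pi} (\<lambda>x. h x * (1 - E 1 x))"
  proof (rule si_bmult[OF h_si])
    show "(\<lambda>x. 1 - E 1 x) \<in> borel_measurable borel" by measurable
    fix x show "norm (1 - E 1 x) \<le> 2" using norm_triangle_ineq4[of 1 "E 1 x"] by simp
  qed
  moreover have "set_integrable lborel {-pi..pi} (\<lambda>x. Dc)"
    using const_si[of Dc 0] by simp
  ultimately show ?thesis unfolding uu_def by (rule set_integral_diff(1))
qed

lemma ae_h: "AE x in lborel. x \<in> {-pi..pi} \<longrightarrow> h x * (1 - E 1 x) = Dc"
proof -
  have "AE x in lborel. x \<in> {-pi..pi} \<longrightarrow> uu x = 0"
    by (rule uniqueness[OF uu_si uu_orth])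
  then show ?thesis unfolding uu_def by simp
qed

lemma Dc0: "Dc = 0" by (rule nonint[OF h_si ae_h])

lemma ae_fG: "AE x in lborel. x \<in> {-pi..pi} \<longrightarrow> f x = G x"
  using ae_h AE_lborel_singleton[of 0]
proof eventually_elim
  case (elim x)
  show ?case
  proof
    assume x: "x \<in> {-pi..pi}"
    have "norm (1 - cis x) \<ge> \<bar>x\<bar>/2" using x by (intro norm_1_cis_lower) auto
    then have "1 - E 1 x \<noteq> 0" using elim by (auto simp: E_cis)
    moreover have "h x * (1 - E 1 x) = 0" using elim x Dc0 by simp
    ultimately have "h x = 0" by simp
    then show "f x = G x" unfolding h_def by simp
  qed
qed

end


context mctx
begin

lemma C0_pos: "0 < C0"
  unfolding C0_def discr.C0_def[OF dI] using discr.W_pos[OF dI] by simp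

lemma final: "in_Lp p f \<and> Lp_norm p f \<le> C0 powr (1/p) * Ip p f"
proof -
  have meas: "f \<in> borel_measurable (restrict_space lborel {-pi..pi})"
  proof -
    have "integrable (restrict_space lborel {-pi..pi}) f"
      using fi by (subst set_integrable_eq[symmetric]) auto
    then show ?thesis by (rule borel_measurable_integrable)
  qed
  have fm: "(\<lambda>x. indicator {-pi..pi} x *\<^sub>R f x) \<in> borel_measurable lborel"
    using fi unfolding set_integrable_def by (rule borel_measurable_integrable)
  have p0: "0 < p" using p by simp
  have Peq: "(\<lambda>x. indicator {-pi..pi} x *\<^sub>R (norm (f x) powr p)) = (\<lambda>x. norm (indicator {-pi..pi} x *\<^sub>R f x) powr p)"
    using p0 by (auto simp: indicator_def)
  have Pm: "(\<lambda>x. indicator {-pi..pi} x *\<^sub>R (norm (f x) powr p)) \<in> borel_measurable lborel"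
    unfolding Peq using fm by measurable
  have bd: "AE x in lborel. norm (indicator {-pi..pi} x *\<^sub>R (norm (f x) powr p)) \<le> norm (indicator {-pi..pi} x * H x powr p)"
    using ae_fG
  proof eventually_elim
    case (elim x)
    show ?case
    proof (cases "x \<in> {-pi..pi}")
      case True
      then have "norm (f x) \<le> H x" using elim G_bound[of x] by simp
      then have "norm (f x) powr p \<le> H x powr p" using p0 by (intro powr_mono2) auto
      then show ?thesis using True by simp
    qed simp
  qed
  have Pi: "integrable lborel (\<lambda>x. indicator {-pi..pi} x *\<^sub>R (norm (f x) powr p))"
    by (rule Bochner_Integration.integrable_bound[OF Hp_integrable Pm bd])
  have inLp: "in_Lp p f"
    unfolding in_Lp_def set_integrable_def using meas Pi by simp
  have SI0: "0 \<le> SI" unfolding SI_def using sm Ip_nonneg by (intro suminf_nonneg) auto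
  have I0: "0 \<le> (LINT x:{-pi..pi}|lborel. norm (f x) powr p)"
    unfolding set_lebesgue_integral_def by (rule Bochner_Integration.integral_nonneg) auto
  have "(LINT x:{-pi..pi}|lborel. norm (f x) powr p) \<le> integral\<^sup>L lborel (\<lambda>x. indicator {-pi..pi} x * H x powr p)"
    unfolding set_lebesgue_integral_def
  proof (rule integral_mono_AE[OF Pi Hp_integrable])
    show "AE x in lborel. indicator {-pi..pi} x *\<^sub>R (norm (f x) powr p) \<le> indicator {-pi..pi} x * H x powr p"
      using bd by eventually_elim (auto simp: indicator_def)
  qed
  also have "\<dots> \<le> C0 * SI" by (rule Hp_integral)
  finally have le: "(LINT x:{-pi..pi}|lborel. norm (f x) powr p) \<le> C0 * SI" .
  have "Lp_norm p f = (LINT x:{-pi..pi}|lborel. norm (f x) powr p) powr (1/p)"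
    unfolding Lp_norm_def ..
  also have "\<dots> \<le> (C0 * SI) powr (1/p)" using le I0 p0 by (intro powr_mono2) auto
  also have "\<dots> = C0 powr (1/p) * SI powr (1/p)" using C0_pos SI0 by (simp add: powr_mult)
  also have "SI powr (1/p) = Ip p f" unfolding Ip_def SI_def ..
  finally show ?thesis using inLp by simp
qed

end

theorem mainTheorem8:
  fixes p :: real
  assumes "1 < p"
  shows "\<exists>C>0. \<forall>f :: real \<Rightarrow> complex.
           set_integrable lborel {-pi..pi} f \<and> Ip_finite p f \<longrightarrow>
             in_Lp p f \<and> Lp_norm p f \<le> C * Ip p f"
proof -
  have d0: "discr p (\<lambda>_. 0)" by unfold_locales (use assms in auto)
  have pos: "0 < discr.C0 p"
    unfolding discr.C0_def[OF d0] using discr.W_pos[OF d0] by simp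
  show ?thesis
  proof (rule exI[of _ "discr.C0 p powr (1/p)"], rule conjI)
    show "0 < discr.C0 p powr (1/p)" using pos by simp
    show "\<forall>f :: real \<Rightarrow> complex. set_integrable lborel {-pi..pi} f \<and> Ip_finite p f \<longrightarrow>
             in_Lp p f \<and> Lp_norm p f \<le> discr.C0 p powr (1/p) * Ip p f"
    proof (intro allI impI)
      fix f :: "real \<Rightarrow> complex"
      assume A: "set_integrable lborel {-pi..pi} f \<and> Ip_finite p f"
      interpret M: mctx p f
        by unfold_locales (use assms A in \<open>auto simp: Ip_finite_def\<close>)
      show "in_Lp p f \<and> Lp_norm p f \<le> discr.C0 p powr (1/p) * Ip p f"
        using M.final unfolding M.C0_def .
    qed
  qed
qed


end
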